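(* Let $k\geq 3$ and let $\mathcal{G}$ be a $k$-uniform supertree of order $n$. Then $\rho(\mathcal{G})\leq\rho(\mathcal{S}^{\ast}(n, k))$, with equality if and only if $\mathcal{G}\cong \mathcal{S}^{\ast}(n, k)$.
   Context: A hypergraph $\mathcal{G}=(V,E)$ has a nonempty finite vertex set $V$ and a set $E$ of distinct edges, each edge being a subset of $V$ with at least two vertices; $n=|V|$ is the order and $m=|E|$ the number of edges. It is $k$-uniform if every edge has exactly $k$ vertices. Its adjacency matrix $\mathcal{A}_{\mathcal{G}}$ is the $n\times n$ matrix with $(\mathcal{A}_{\mathcal{G}})_{ij}=\sum_{e\in E,\ i,j\in e}\frac{1}{|e|-1}$ for $i\neq j$ (and $0$ on the diagonal), and the spectral radius $\rho(\mathcal{G})$ is the largest modulus of an eigenvalue of $\mathcal{A}_{\mathcal{G}}$. A hypergraph is connected if any two vertices are joined by a sequence of edges in which consecutive edges intersect. It is acyclic if it contains no (Berge) cycle, i.e. no sequence $v_1e_1v_2e_2\cdots v_qe_qv_1$ with $q\ge 2$, distinct vertices $v_i$, distinct edges $e_i$, and $v_i,v_{i+1}\in e_i$ (indices mod $q$). A supertree is a connected acyclic hypergraph; in particular any two edges of a supertree share at most one vertex, and a $k$-uniform supertree of order $n$ has $\frac{n-1}{k-1}$ edges. The $k$-uniform superstar $\mathcal{S}^{\ast}(n,k)$ of order $n$ is the $k$-uniform supertree in which all edges contain one common vertex (and pairwise meet only in that vertex). Isomorphism of hypergraphs means a vertex bijection mapping edges to edges. *)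

theory Defs
  imports Complex_Main
begin

definition hypergraph :: "'a set \<Rightarrow> 'a set set \<Rightarrow> bool" where
  "hypergraph V E \<longleftrightarrow> finite V \<and> V \<noteq> {} \<and> (\<forall>e\<in>E. e \<subseteq> V \<and> card e \<ge> 2)"

definition uniform :: "nat \<Rightarrow> 'a set set \<Rightarrow> bool" where
  "uniform k E \<longleftrightarrow> (\<forall>e\<in>E. card e = k)"

definition adj :: "'a set set \<Rightarrow> 'a \<Rightarrow> 'a \<Rightarrow> real" where
  "adj E i j = (if i = j then 0
     else (\<Sum>e\<in>{e\<in>E. i \<in> e \<and> j \<in> e}. 1 / (real (card e) - 1)))"

definition hg_eigenvalue :: "'a set \<Rightarrow> 'a set set \<Rightarrow> complex \<Rightarrow> bool" where
  "hg_eigenvalue V E \<mu> \<longleftrightarrow> (\<exists>x :: 'a \<Rightarrow> complex. (\<exists>i\<in>V. x i \<noteq> 0) \<and>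
     (\<forall>i\<in>V. (\<Sum>j\<in>V. complex_of_real (adj E i j) * x j) = \<mu> * x i))"

definition spectral_radius :: "'a set \<Rightarrow> 'a set set \<Rightarrow> real" where
  "spectral_radius V E = Sup {cmod \<mu> | \<mu>. hg_eigenvalue V E \<mu>}"

definition hg_connected :: "'a set \<Rightarrow> 'a set set \<Rightarrow> bool" where
  "hg_connected V E \<longleftrightarrow> (\<forall>u\<in>V. \<forall>v\<in>V. u = v \<or>
     (\<exists>es. es \<noteq> [] \<and> set es \<subseteq> E \<and> u \<in> hd es \<and> v \<in> last es \<and>
        (\<forall>i. Suc i < length es \<longrightarrow> es ! i \<inter> es ! Suc i \<noteq> {})))"

definition has_berge_cycle :: "'a set set \<Rightarrow> bool" where
  "has_berge_cycle E \<longleftrightarrow> (\<exists>q::nat. \<exists>vs :: nat \<Rightarrow> 'a. \<exists>es :: nat \<Rightarrow> 'a set.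
     q \<ge> 2 \<and> inj_on vs {..<q} \<and> inj_on es {..<q} \<and>
     (\<forall>i<q. es i \<in> E \<and> vs i \<in> es i \<and> vs (Suc i mod q) \<in> es i))"

definition supertree :: "'a set \<Rightarrow> 'a set set \<Rightarrow> bool" where
  "supertree V E \<longleftrightarrow> hypergraph V E \<and> hg_connected V E \<and> \<not> has_berge_cycle E"

definition hg_iso :: "'a set \<Rightarrow> 'a set set \<Rightarrow> 'b set \<Rightarrow> 'b set set \<Rightarrow> bool" where
  "hg_iso V E V' E' \<longleftrightarrow> (\<exists>f. bij_betw f V V' \<and> (\<lambda>e. f ` e) ` E = E')"

text \<open>The k-uniform superstar S*(n,k): vertex 0 is the centre, the i-th edge is
  {0} together with the block {i(k-1)+1, ..., (i+1)(k-1)}, for i < (n-1)/(k-1).\<close>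
definition superstar_V :: "nat \<Rightarrow> nat set" where
  "superstar_V n = {0..<n}"

definition superstar_E :: "nat \<Rightarrow> nat \<Rightarrow> nat set set" where
  "superstar_E n k = {insert 0 {i * (k - 1) + 1 ..< (i + 1) * (k - 1) + 1} | i. i < (n - 1) div (k - 1)}"

end

theory Submission
  imports Defs "Jordan_Normal_Form.Char_Poly" "HOL-Computational_Algebra.Fundamental_Theorem_Algebra"
begin

lemma min_repeat:
  fixes p :: "nat \<Rightarrow> 'n"
  assumes "p 0 = p L" "0 < L" "\<forall>i<L. p i \<noteq> p (Suc i)" "\<forall>i. i+2 \<le> L \<longrightarrow> p i \<noteq> p (i+2)"
  shows "\<exists>i j. i < j \<and> j \<le> L \<and> p i = p j \<and> 3 \<le> j - i \<and> inj_on p {i..<j}"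
proof -
  define P where "P d = (\<exists>i j. i<j \<and> j \<le> L \<and> p i = p j \<and> j - i = d)" for d
  have PL: "P L" unfolding P_def using assms by (intro exI[of _ 0] exI[of _ L]) auto
  define d0 where "d0 = (LEAST d. P d)"
  have "P d0" unfolding d0_def using PL by (rule LeastI)
  then obtain i j where ij: "i<j" "j \<le> L" "p i = p j" "j - i = d0" unfolding P_def by blast
  have mn: "\<And>d. P d \<Longrightarrow> d0 \<le> d" unfolding d0_def by (rule Least_le)
  have inj: "inj_on p {i..<j}"
  proof (rule inj_onI, rule ccontr)
    fix a b assume ab: "a \<in> {i..<j}" "b \<in> {i..<j}" "p a = p b" "a \<noteq> b"
    show False
    proof (cases "a < b")
      case True
      hence "P (b - a)" unfolding P_def using ab ij by (intro exI[of _ a] exI[of _ b]) auto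
      from mn[OF this] show False using ab ij True by auto
    next
      case False
      hence "P (a - b)" unfolding P_def using ab ij by (intro exI[of _ b] exI[of _ a]) auto
      from mn[OF this] show False using ab ij False by auto
    qed
  qed
  have "j - i \<noteq> 1"
  proof
    assume "j - i = 1" hence "j = Suc i" using ij by auto
    thus False using ij assms(3) by auto
  qed
  moreover have "j - i \<noteq> 2"
  proof
    assume "j - i = 2" hence "j = i + 2" using ij by auto
    thus False using ij assms(4) by auto
  qed
  ultimately show ?thesis using ij inj by (intro exI[of _ i] exI[of _ j]) auto
qed

definition binc :: "'a set set \<Rightarrow> ('a + 'a set) \<Rightarrow> ('a + 'a set) \<Rightarrow> bool" where
  "binc E x y \<longleftrightarrow> (\<exists>v e. e \<in> E \<and> v \<in> e \<and> ((x = Inl v \<and> y = Inr e) \<or> (x = Inr e \<and> y = Inl v)))"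

lemma periodic_mod:
  fixes c :: "nat \<Rightarrow> 'b" and d :: nat
  assumes "\<forall>t. c (t + d) = c t"
  shows "c t = c (t mod d)"
proof -
  have "c (r + d * m) = c r" for m r
  proof (induction m)
    case (Suc m)
    have "c (r + d * Suc m) = c (r + d * m + d)" by (simp add: algebra_simps)
    also have "\<dots> = c r" using assms Suc by simp
    finally show ?case .
  qed simp
  from this[of "t mod d" "t div d"] show ?thesis by simp
qed

lemma bip_cycle:
  fixes c :: "nat \<Rightarrow> 'a + 'a set"
  assumes R: "\<forall>t. binc E (c t) (c (Suc t))"
    and per: "\<forall>t. c (t + d) = c t"
    and inj: "inj_on c {..<d}"
    and d3: "3 \<le> d"
  shows "has_berge_cycle E"
proof -
  have alt: "isl (c (Suc t)) \<longleftrightarrow> \<not> isl (c t)" for t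
    using R[rule_format, of t] unfolding binc_def by auto
  have altt: "isl (c t) \<longleftrightarrow> (isl (c 0) \<longleftrightarrow> even t)" for t
    by (induction t) (auto simp: alt)
  have "c d = c 0" using per[rule_format, of 0] by simp
  hence "even d" using altt[of d] by auto
  with d3 have d4: "4 \<le> d" by presburger
  define s where "s = (if isl (c 0) then 0 else (1::nat))"
  have s1: "s \<le> 1" by (simp add: s_def)
  have isl_s: "isl (c (s + 2 * t))" "\<not> isl (c (s + 2 * t + 1))" for t
    using altt[of "s + 2*t"] altt[of "s + 2*t+1"] by (auto simp: s_def)
  define q where "q = d div 2"
  have q2: "2 \<le> q" and dq: "d = 2 * q" using d4 \<open>even d\<close> by (auto simp: q_def)
  define vs where "vs t = projl (c (s + 2 * t))" for t
  define es where "es t = projr (c (s + 2 * t + 1))" for t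
  have cv: "c (s + 2 * t) = Inl (vs t)" for t
    using isl_s(1)[of t] unfolding vs_def by (cases "c (s + 2*t)") auto
  have ce: "c (s + 2 * t + 1) = Inr (es t)" for t
    using isl_s(2)[of t] unfolding es_def by (cases "c (s + 2*t+1)") auto
  have A: "es t \<in> E \<and> vs t \<in> es t" for t
    using R[rule_format, of "s + 2*t"] cv[of t] ce[of t] unfolding binc_def by auto
  have B: "vs (Suc t) \<in> es t" for t
  proof -
    have "c (s + 2 * Suc t) = c (Suc (s + 2 * t + 1))" by simp
    thus ?thesis using R[rule_format, of "s + 2*t+1"] cv[of "Suc t"] ce[of t] unfolding binc_def by auto
  qed
  have vq: "vs q = vs 0"
  proof -
    have "c (s + 2 * q) = c (s + 2 * 0)" using per[rule_format, of s] dq by simp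
    thus ?thesis using cv[of q] cv[of 0] by simp
  qed
  have C: "vs (Suc t mod q) \<in> es t" if "t < q" for t
  proof (cases "Suc t < q")
    case True thus ?thesis using B[of t] by simp
  next
    case False hence "Suc t = q" using that by simp
    thus ?thesis using B[of t] vq by simp
  qed
  have injv: "inj_on vs {..<q}"
  proof (rule inj_onI)
    fix a b assume ab: "a \<in> {..<q}" "b \<in> {..<q}" "vs a = vs b"
    hence "c (s + 2*a) = c (s + 2*b)" using cv by simp
    moreover have "s + 2*a \<in> {..<d}" "s + 2*b \<in> {..<d}" using ab s1 dq by auto
    ultimately have "s + 2*a = s + 2*b" using inj by (auto dest: inj_onD)
    thus "a = b" by simp
  qed
  have cm: "c t = c (t mod d)" for t using periodic_mod[OF per] .
  have inje: "inj_on es {..<q}"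
  proof (rule inj_onI)
    fix a b assume ab: "a \<in> {..<q}" "b \<in> {..<q}" "es a = es b"
    hence "c (s + 2*a + 1) = c (s + 2*b + 1)" using ce by simp
    hence "c ((s + 2*a + 1) mod d) = c ((s + 2*b + 1) mod d)" using cm by metis
    moreover have "(s + 2*a + 1) mod d \<in> {..<d}" "(s + 2*b + 1) mod d \<in> {..<d}" using d4 by auto
    ultimately have eq: "(s + 2*a + 1) mod d = (s + 2*b + 1) mod d" using inj by (auto dest: inj_onD)
    have ra: "s + 2*a + 1 \<le> d" "s + 2*b + 1 \<le> d" using ab s1 dq by auto
    show "a = b"
    proof (cases "s + 2*a + 1 = d")
      case True
      hence "(s + 2*b + 1) mod d = 0" using eq by simp
      hence "s + 2*b + 1 = d"
      proof -
        assume m0: "(s + 2*b + 1) mod d = 0"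
        show ?thesis proof (rule ccontr)
          assume "s + 2*b + 1 \<noteq> d" hence "s + 2*b + 1 < d" using ra(2) by simp
          hence "(s + 2*b + 1) mod d = s + 2*b + 1" by simp
          thus False using m0 by simp
        qed
      qed
      thus ?thesis using True by simp
    next
      case False
      hence "(s + 2*a + 1) mod d = s + 2*a + 1" using ra(1) by simp
      moreover have "s + 2*b + 1 \<noteq> d" proof
        assume "s + 2*b + 1 = d" thus False using eq False \<open>(s + 2*a + 1) mod d = s + 2*a + 1\<close> by simp
      qed
      hence "(s + 2*b + 1) mod d = s + 2*b + 1" using ra(2) by simp
      ultimately show ?thesis using eq by simp
    qed
  qed
  show ?thesis unfolding has_berge_cycle_def
    using q2 injv inje A C by (intro exI[of _ q] exI[of _ vs] exI[of _ es]) auto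
qed

fun walk :: "'a set set \<Rightarrow> 'a list \<Rightarrow> 'a set list \<Rightarrow> bool" where
  "walk E [v] [] = True"
| "walk E (v # w # vs) (e # es) = (e \<in> E \<and> v \<in> e \<and> w \<in> e \<and> v \<noteq> w \<and> (es \<noteq> [] \<longrightarrow> e \<noteq> hd es) \<and> walk E (w # vs) es)"
| "walk E _ _ = False"

lemma walk_props:
  "walk E vs es \<Longrightarrow> length vs = Suc (length es) \<and>
    (\<forall>t<length es. es!t \<in> E \<and> vs!t \<in> es!t \<and> vs!Suc t \<in> es!t \<and> vs!t \<noteq> vs!Suc t) \<and>
    (\<forall>t. Suc t < length es \<longrightarrow> es!t \<noteq> es!Suc t)"
proof (induction E vs es rule: walk.induct)
  case (2 E v w vs e es)
  have a: "length (v # w # vs) = Suc (length (e # es))" using 2 by auto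
  have b: "\<forall>t<length (e # es). (e # es) ! t \<in> E \<and> (v # w # vs) ! t \<in> (e # es) ! t \<and> (v # w # vs) ! Suc t \<in> (e # es) ! t \<and> (v # w # vs) ! t \<noteq> (v # w # vs) ! Suc t"
  proof (intro allI impI)
    fix t assume t: "t < length (e # es)"
    show "(e # es) ! t \<in> E \<and> (v # w # vs) ! t \<in> (e # es) ! t \<and> (v # w # vs) ! Suc t \<in> (e # es) ! t \<and> (v # w # vs) ! t \<noteq> (v # w # vs) ! Suc t"
      using 2 t by (cases t) auto
  qed
  have c: "\<forall>t. Suc t < length (e # es) \<longrightarrow> (e # es) ! t \<noteq> (e # es) ! Suc t"
  proof (intro allI impI)
    fix t assume t: "Suc t < length (e # es)"
    show "(e # es) ! t \<noteq> (e # es) ! Suc t"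
      using 2 t by (cases t; cases es) auto
  qed
  show ?case using a b c by blast
qed auto

lemma walk_cycle:
  assumes w: "walk E vs es" and ne: "es \<noteq> []" and hl: "hd vs = last vs"
  shows "has_berge_cycle E"
proof -
  define q where "q = length es"
  note wp = walk_props[OF w]
  have lv: "length vs = Suc q" using wp q_def by simp
  have q0: "0 < q" using ne q_def by simp
  define p where "p i = (if even i then Inl (vs ! (i div 2)) else Inr (es ! (i div 2)))" for i :: nat
  have v0q: "vs ! 0 = vs ! q"
    proof -
    have "vs \<noteq> []" using lv by auto
    thus ?thesis using hl lv by (simp add: hd_conv_nth last_conv_nth)
  qed
  have Rp: "binc E (p a) (p (Suc a))" if "a < 2 * q" for a
  proof (cases "even a")
    case True
    then obtain t where t: "a = 2 * t" by blast
    hence "t < q" using that by simp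
    thus ?thesis using wp t unfolding p_def binc_def q_def by auto
  next
    case False
    then obtain t where t: "a = 2 * t + 1" using oddE by blast
    hence "t < q" using that by simp
    moreover have "Suc a div 2 = Suc t" using t by simp
    ultimately show ?thesis using wp t unfolding p_def binc_def q_def by auto
  qed
  have h1: "p 0 = p (2*q)" using v0q by (simp add: p_def)
  have h2: "\<forall>i<2*q. p i \<noteq> p (Suc i)" by (auto simp: p_def)
  have h3: "\<forall>i. i+2 \<le> 2*q \<longrightarrow> p i \<noteq> p (i+2)"
  proof (intro allI impI)
    fix i assume i: "i + 2 \<le> 2*q"
    show "p i \<noteq> p (i+2)"
    proof (cases "even i")
      case True
      then obtain t where t: "i = 2 * t" by blast
      hence "t < q" using i by simp
      thus ?thesis using wp t unfolding p_def q_def by auto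
    next
      case False
      then obtain t where t: "i = 2 * t + 1" using oddE by blast
      hence "Suc t < q" using i by simp
      moreover have "(i + 2) div 2 = Suc t" "i div 2 = t" using t by auto
      ultimately show ?thesis using wp t unfolding p_def q_def by auto
    qed
  qed
  obtain i j where ij: "i < j" "j \<le> 2*q" "p i = p j" "3 \<le> j - i" "inj_on p {i..<j}"
    using min_repeat[of p "2*q", OF h1 _ h2 h3] q0 by auto
  define d where "d = j - i"
  define c where "c t = p (i + t mod d)" for t
  have d0: "0 < d" using ij d_def by simp
  have R: "\<forall>t. binc E (c t) (c (Suc t))"
  proof
    fix t
    show "binc E (c t) (c (Suc t))"
    proof (cases "Suc (t mod d) < d")
      case True
      hence "Suc t mod d = Suc (t mod d)" by (simp add: mod_Suc)
      moreover have "i + t mod d < 2*q" using True ij d_def by simp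
      ultimately show ?thesis unfolding c_def using Rp[of "i + t mod d"] by simp
    next
      case False
      have "t mod d < d" using d0 by simp
      hence tm: "t mod d = d - 1" using False by linarith
      hence "Suc t mod d = 0" using d0 by (simp add: mod_Suc)
      hence "c (Suc t) = p j" unfolding c_def using ij by simp
      moreover have "c t = p (j - 1)" unfolding c_def using tm ij d_def by simp
      moreover have "Suc (j - 1) = j" using ij by simp
      ultimately show ?thesis using Rp[of "j - 1"] ij by auto
    qed
  qed
  have per: "\<forall>t. c (t + d) = c t" unfolding c_def by simp
  have inj: "inj_on c {..<d}"
  proof (rule inj_onI)
    fix a b assume ab: "a \<in> {..<d}" "b \<in> {..<d}" "c a = c b"
    hence "p (i + a) = p (i + b)" unfolding c_def by simp
    moreover have "i + a \<in> {i..<j}" "i + b \<in> {i..<j}" using ab d_def by auto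
    ultimately show "a = b" using ij(5) by (auto dest: inj_onD)
  qed
  show ?thesis using bip_cycle[OF R per inj] ij d_def by simp
qed

locale hyp =
  fixes V :: "'a set" and E :: "'a set set" and k :: nat
  assumes finV: "finite V" and subV: "\<And>e. e \<in> E \<Longrightarrow> e \<subseteq> V"
    and unif: "\<And>e. e \<in> E \<Longrightarrow> card e = k" and k3: "3 \<le> k"
    and acyc: "\<not> has_berge_cycle E"
begin

definition D where "D i = {e\<in>E. i \<in> e}"
lemma nowalk: "walk E vs es \<Longrightarrow> es \<noteq> [] \<Longrightarrow> hd vs = last vs \<Longrightarrow> False"
  using walk_cycle acyc by blast

definition Trip where "Trip v = Sigma (D v) (\<lambda>e. Sigma (e - {v}) (\<lambda>j. D j - {e}))"
definition T where "T v = card (D v) + card (Trip v)"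
lemma finE: "finite E"
proof -
  have "E \<subseteq> Pow V" using subV by auto
  thus ?thesis using finV by (simp add: finite_subset)
qed

lemma fin_e: "e \<in> E \<Longrightarrow> finite e" using subV finV finite_subset by blast

lemma finD: "finite (D i)" unfolding D_def using finE by simp

lemma finTrip: "finite (Trip v)"
  unfolding Trip_def
proof (intro finite_SigmaI finD)
  fix e assume "e \<in> D v"
  hence "finite e" using fin_e by (simp add: D_def)
  thus "finite (e - {v})" by simp
  fix j show "finite (D j - {e})" using finD by simp
qed

lemma C2: "e \<in> E \<Longrightarrow> f \<in> E \<Longrightarrow> e \<noteq> f \<Longrightarrow> a \<in> e \<Longrightarrow> b \<in> e \<Longrightarrow> a \<in> f \<Longrightarrow> b \<in> f \<Longrightarrow> a \<noteq> b \<Longrightarrow> False"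
  using nowalk[of "[a,b,a]" "[e,f]"] by simp
lemma card_minus: "e \<in> E \<Longrightarrow> u \<in> e \<Longrightarrow> card (e - {u}) = k - 1"
  using unif fin_e by (simp add: card_Diff_singleton)

lemma TripD: "(e, j, f) \<in> Trip u \<Longrightarrow> e \<in> E \<and> u \<in> e \<and> j \<in> e \<and> j \<noteq> u \<and> f \<in> E \<and> j \<in> f \<and> f \<noteq> e"
  unfolding Trip_def D_def by auto

lemma D4: "(e, j, f) \<in> Trip u \<Longrightarrow> u \<notin> f"
  using TripD C2[of e f u j] by blast

lemma D1: "e \<in> D u \<Longrightarrow> e' \<in> D u \<Longrightarrow> e \<noteq> e' \<Longrightarrow> w \<in> e \<Longrightarrow> w \<in> e' \<Longrightarrow> w \<noteq> u \<Longrightarrow> False"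
  unfolding D_def using C2[of e e' u w] by auto

lemma D3: "e' \<in> D u \<Longrightarrow> w \<in> e' - {u} \<Longrightarrow> (e, j, f) \<in> Trip u \<Longrightarrow> w \<in> f - {j} \<Longrightarrow> False"
proof -
  assume a: "e' \<in> D u" "w \<in> e' - {u}" "(e, j, f) \<in> Trip u" "w \<in> f - {j}"
  have "u \<notin> f" using D4 a by blast
  hence "f \<noteq> e'" using a unfolding D_def by auto
  thus False using nowalk[of "[u,j,w,u]" "[e,f,e']"] TripD[OF a(3)] a unfolding D_def by auto
qed

lemma D2: "(e, j, f) \<in> Trip u \<Longrightarrow> (e', j', f') \<in> Trip u \<Longrightarrow> (e, j, f) \<noteq> (e', j', f') \<Longrightarrow>
  w \<in> f - {j} \<Longrightarrow> w \<in> f' - {j'} \<Longrightarrow> False"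
proof -
  assume a: "(e, j, f) \<in> Trip u" "(e', j', f') \<in> Trip u" "(e, j, f) \<noteq> (e', j', f')"
    "w \<in> f - {j}" "w \<in> f' - {j'}"
  note t1 = TripD[OF a(1)] and t2 = TripD[OF a(2)]
  show False
  proof (cases "f = f'")
    case False
    thus False using nowalk[of "[u,j,w,j',u]" "[e,f,f',e']"] t1 t2 a by auto
  next
    case True
    show False
    proof (cases "j = j'")
      case False
      thus False using nowalk[of "[u,j,j',u]" "[e,f,e']"] t1 t2 a True by auto
    next
      case jj: True
      hence "e \<noteq> e'" using a True by auto
      thus False using nowalk[of "[u,j,u]" "[e,e']"] t1 t2 jj by auto
    qed
  qed
qed

definition WA where "WA u = (\<Union>e\<in>D u. e - {u})"
definition WB where "WB u = (\<Union>t\<in>Trip u. snd (snd t) - {fst (snd t)})"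

lemma card_WA: "card (WA u) = card (D u) * (k - 1)"
proof -
  have "card (WA u) = (\<Sum>e\<in>D u. card (e - {u}))" unfolding WA_def
  proof (rule card_UN_disjoint)
    show "finite (D u)" by (rule finD)
    show "\<forall>e\<in>D u. finite (e - {u})" using fin_e unfolding D_def by blast
    show "\<forall>e\<in>D u. \<forall>e'\<in>D u. e \<noteq> e' \<longrightarrow> (e - {u}) \<inter> (e' - {u}) = {}"
    proof (intro ballI impI)
      fix e e' assume a: "e \<in> D u" "e' \<in> D u" "e \<noteq> e'"
      show "(e - {u}) \<inter> (e' - {u}) = {}"
      proof (rule ccontr)
        assume "(e - {u}) \<inter> (e' - {u}) \<noteq> {}"
        then obtain w where "w \<in> e" "w \<in> e'" "w \<noteq> u" by blast
        thus False using D1[OF a] by blast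
      qed
    qed
  qed
  also have "\<dots> = (\<Sum>e\<in>D u. k - 1)"
  proof (rule sum.cong)
    fix e assume "e \<in> D u" thus "card (e - {u}) = k - 1" using card_minus unfolding D_def by blast
  qed simp
  finally show ?thesis by simp
qed

lemma card_WB: "card (WB u) = card (Trip u) * (k - 1)"
proof -
  have "card (WB u) = (\<Sum>t\<in>Trip u. card (snd (snd t) - {fst (snd t)}))" unfolding WB_def
  proof (rule card_UN_disjoint)
    show "finite (Trip u)" by (rule finTrip)
    show "\<forall>t\<in>Trip u. finite (snd (snd t) - {fst (snd t)})"
    proof
      fix t assume "t \<in> Trip u"
      then obtain e j f where t: "t = (e, j, f)" "(e, j, f) \<in> Trip u" by (cases t) auto
      hence "finite f" using TripD fin_e by blast
      thus "finite (snd (snd t) - {fst (snd t)})" using t by simp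
    qed
    show "\<forall>t1\<in>Trip u. \<forall>t2\<in>Trip u. t1 \<noteq> t2 \<longrightarrow> (snd (snd t1) - {fst (snd t1)}) \<inter> (snd (snd t2) - {fst (snd t2)}) = {}"
    proof (intro ballI impI)
      fix t1 t2 assume a: "t1 \<in> Trip u" "t2 \<in> Trip u" "t1 \<noteq> t2"
      obtain e j f where t1: "t1 = (e, j, f)" by (cases t1) auto
      obtain e' j' f' where t2: "t2 = (e', j', f')" by (cases t2) auto
      show "(snd (snd t1) - {fst (snd t1)}) \<inter> (snd (snd t2) - {fst (snd t2)}) = {}"
      proof (rule ccontr)
        assume "(snd (snd t1) - {fst (snd t1)}) \<inter> (snd (snd t2) - {fst (snd t2)}) \<noteq> {}"
        then obtain w where "w \<in> f - {j}" "w \<in> f' - {j'}" using t1 t2 by auto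
        thus False using D2[of e j f u e' j' f' w] a t1 t2 by blast
      qed
    qed
  qed
  also have "\<dots> = (\<Sum>t\<in>Trip u. k - 1)"
  proof (rule sum.cong)
    fix t assume "t \<in> Trip u"
    then obtain e j f where t: "t = (e, j, f)" "(e, j, f) \<in> Trip u" by (cases t) auto
    hence "f \<in> E" "j \<in> f" using TripD by blast+
    thus "card (snd (snd t) - {fst (snd t)}) = k - 1" using t card_minus by simp
  qed simp
  finally show ?thesis by simp
qed

lemma WAB_disj: "WA u \<inter> WB u = {}"
proof (rule ccontr)
  assume "WA u \<inter> WB u \<noteq> {}"
  then obtain w e' t where w: "e' \<in> D u" "w \<in> e' - {u}" "t \<in> Trip u" "w \<in> snd (snd t) - {fst (snd t)}"
    unfolding WA_def WB_def by blast
  obtain e j f where t: "t = (e, j, f)" by (cases t) auto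
  show False using D3[of e' u w e j f] w t by simp
qed

lemma WAB_sub: "WA u \<union> WB u \<subseteq> V - {u}"
proof
  fix w assume "w \<in> WA u \<union> WB u"
  thus "w \<in> V - {u}"
  proof
    assume "w \<in> WA u"
    then obtain e where "e \<in> D u" "w \<in> e - {u}" unfolding WA_def by blast
    thus ?thesis using subV unfolding D_def by blast
  next
    assume "w \<in> WB u"
    then obtain t where t0: "t \<in> Trip u" "w \<in> snd (snd t) - {fst (snd t)}" unfolding WB_def by blast
    obtain e j f where t: "t = (e, j, f)" by (cases t) auto
    have "f \<in> E" "u \<notin> f" using TripD[of e j f u] D4[of e j f u] t0 t by auto
    thus ?thesis using subV t0 t by auto
  qed
qed

lemma finWAB: "finite (WA u)" "finite (WB u)"
proof -
  have "finite (WA u \<union> WB u)" using WAB_sub finV finite_subset by blast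
  thus "finite (WA u)" "finite (WB u)" by auto
qed

lemma T_count: "(k - 1) * T u \<le> card V - 1" if "u \<in> V"
proof -
  have "(k - 1) * T u = card (WA u \<union> WB u)"
    using card_Un_disjoint[OF finWAB WAB_disj] card_WA card_WB by (simp add: T_def algebra_simps)
  also have "\<dots> \<le> card (V - {u})" by (rule card_mono) (use finV WAB_sub in auto)
  also have "\<dots> = card V - 1" using that finV by simp
  finally show ?thesis .
qed

lemma div_bound: "(k - 1) * t \<le> N \<Longrightarrow> t \<le> N div (k - 1)"
  proof -
  assume a: "(k - 1) * t \<le> N"
  have "t = (k - 1) * t div (k - 1)" using k3 by simp
  also have "\<dots> \<le> N div (k - 1)" using a by (rule div_le_mono)
  finally show ?thesis .
qed

lemma T_le: "u \<in> V \<Longrightarrow> T u \<le> (card V - 1) div (k - 1)"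
  using T_count div_bound by blast

lemma FAR:
  assumes uV: "u \<in> V" and E: "a \<in> E" "b \<in> E" "g \<in> E"
    and inc: "u \<in> a" "j \<in> a" "j \<in> b" "j2 \<in> b" "j2 \<in> g"
    and ne: "a \<noteq> b" "b \<noteq> g" "u \<noteq> j" "j \<noteq> j2" "u \<notin> b" "j \<notin> g"
  shows "T u + 1 \<le> (card V - 1) div (k - 1)"
proof -
  have ug: "u \<notin> g"
  proof
    assume "u \<in> g"
    thus False using nowalk[of "[u,j,j2,u]" "[a,b,g]"] E inc ne by auto
  qed
  define G where "G = g - {j2}"
  have dA: "G \<inter> WA u = {}"
  proof (rule ccontr)
    assume "G \<inter> WA u \<noteq> {}"
    then obtain w c where w: "w \<in> G" "c \<in> D u" "w \<in> c - {u}" unfolding WA_def by blast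
    have "g \<noteq> c" using ug w unfolding D_def by auto
    thus False using nowalk[of "[u,j,j2,w,u]" "[a,b,g,c]"] E inc ne w unfolding G_def D_def by auto
  qed
  have dB: "G \<inter> WB u = {}"
  proof (rule ccontr)
    assume "G \<inter> WB u \<noteq> {}"
    then obtain w t where w0: "w \<in> G" "t \<in> Trip u" "w \<in> snd (snd t) - {fst (snd t)}" unfolding WB_def by blast
    obtain c j' f' where "t = (c, j', f')" by (cases t) auto
    hence w: "w \<in> G" "(c, j', f') \<in> Trip u" "w \<in> f' - {j'}" using w0 by auto
    note t = TripD[OF w(2)]
    have uc: "u \<in> c" using t by simp
    show False
    proof (cases "f' = g")
      case False
      thus False using nowalk[of "[u,j,j2,w,j',u]" "[a,b,g,f',c]"] E inc ne w t unfolding G_def by auto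
    next
      case True
      show False
      proof (cases "j' = j2")
        case True
        have "b \<noteq> c" using ne uc by auto
        thus False using nowalk[of "[u,j,j2,u]" "[a,b,c]"] E inc ne t True by auto
      next
        case False
        have "g \<noteq> c" using ug uc by auto
        thus False using nowalk[of "[u,j,j2,j',u]" "[a,b,g,c]"] E inc ne t False \<open>f' = g\<close> by auto
      qed
    qed
  qed
  have Gsub: "G \<subseteq> V - {u}" using subV[OF E(3)] ug unfolding G_def by auto
  have cG: "card G = k - 1" unfolding G_def using card_minus E inc by simp
  have finG: "finite G" using Gsub finV rev_finite_subset by blast
  have "(k - 1) * (T u + 1) = card (WA u \<union> WB u \<union> G)"
  proof -
    have "card (WA u \<union> WB u \<union> G) = card (WA u \<union> WB u) + card G"
      by (rule card_Un_disjoint) (use finWAB finG dA dB in auto)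
    also have "card (WA u \<union> WB u) = card (WA u) + card (WB u)"
      by (rule card_Un_disjoint[OF finWAB WAB_disj])
    finally show ?thesis using card_WA card_WB cG by (simp add: T_def algebra_simps)
  qed
  also have "\<dots> \<le> card (V - {u})" by (rule card_mono) (use finV WAB_sub Gsub in auto)
  also have "\<dots> = card V - 1" using uV finV by simp
  finally show ?thesis using div_bound by blast
qed

end

context hyp begin

abbreviation "kap \<equiv> complex_of_real (real k - 1)"

lemma kap_nz: "kap \<noteq> 0" using k3 by simp

lemma adj_form:
  assumes iV: "i \<in> V"
  shows "(\<Sum>j\<in>V. complex_of_real (adj E i j) * x j) = (\<Sum>e\<in>D i. \<Sum>j\<in>e-{i}. x j) / kap"
proof -
  have step1: "complex_of_real (adj E i j) * x j = (\<Sum>e\<in>D i. if j \<in> e - {i} then x j / kap else 0)" if jV: "j \<in> V" for j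
  proof (cases "j = i")
    case True thus ?thesis by (simp add: adj_def)
  next
    case False
    define S where "S = {e\<in>D i. j \<in> e}"
    have "adj E i j = (\<Sum>e\<in>S. 1 / (real k - 1))"
      unfolding adj_def S_def D_def using False unif
      by (auto intro!: sum.cong)
    hence a: "adj E i j = real (card S) / (real k - 1)" by simp
    have "(\<Sum>e\<in>D i. if j \<in> e - {i} then x j / kap else 0) = (\<Sum>e\<in>D i. if j \<in> e then x j / kap else 0)"
      using False by (intro sum.cong) auto
    also have "\<dots> = (\<Sum>e\<in>S. x j / kap)" unfolding S_def by (rule sum.inter_filter[symmetric]) (rule finD)
    also have "\<dots> = of_nat (card S) * x j / kap" by simp
    finally show ?thesis using a by simp
  qed
  have "(\<Sum>j\<in>V. complex_of_real (adj E i j) * x j) = (\<Sum>j\<in>V. \<Sum>e\<in>D i. if j \<in> e - {i} then x j / kap else 0)"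
    using step1 by (rule sum.cong[OF refl])
  also have "\<dots> = (\<Sum>e\<in>D i. \<Sum>j\<in>V. if j \<in> e - {i} then x j / kap else 0)" by (rule sum.swap)
  also have "\<dots> = (\<Sum>e\<in>D i. \<Sum>j\<in>e-{i}. x j / kap)"
  proof (rule sum.cong[OF refl])
    fix e assume e: "e \<in> D i"
    have "(\<Sum>j\<in>V. if j \<in> e - {i} then x j / kap else 0) = (\<Sum>j\<in>{j\<in>V. j \<in> e - {i}}. x j / kap)"
      by (rule sum.inter_filter[symmetric]) (rule finV)
    also have "{j\<in>V. j \<in> e - {i}} = e - {i}" using e subV unfolding D_def by blast
    finally show "(\<Sum>j\<in>V. if j \<in> e - {i} then x j / kap else 0) = (\<Sum>j\<in>e-{i}. x j / kap)" .
  qed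
  also have "\<dots> = (\<Sum>e\<in>D i. \<Sum>j\<in>e-{i}. x j) / kap" by (simp add: sum_divide_distrib)
  finally show ?thesis .
qed

lemma eig_eq:
  assumes "hg_eigenvalue V E \<mu>"
  obtains x where "\<exists>i\<in>V. x i \<noteq> 0" "\<forall>i\<in>V. (\<Sum>e\<in>D i. \<Sum>j\<in>e-{i}. x j) = (kap * \<mu>) * x i"
proof -
  obtain x where x: "\<exists>i\<in>V. x i \<noteq> 0" "\<forall>i\<in>V. (\<Sum>j\<in>V. complex_of_real (adj E i j) * x j) = \<mu> * x i"
    using assms unfolding hg_eigenvalue_def by blast
  have "\<forall>i\<in>V. (\<Sum>e\<in>D i. \<Sum>j\<in>e-{i}. x j) = (kap * \<mu>) * x i"
  proof
    fix i assume i: "i \<in> V"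
    have "(\<Sum>e\<in>D i. \<Sum>j\<in>e-{i}. x j) / kap = \<mu> * x i" using x(2) i adj_form[OF i, of x] by simp
    thus "(\<Sum>e\<in>D i. \<Sum>j\<in>e-{i}. x j) = (kap * \<mu>) * x i" using kap_nz by (simp add: field_simps)
  qed
  thus thesis using that x(1) by blast
qed

lemma trip_sum:
  "(\<Sum>(e,j,f)\<in>Trip v. g e j f) = (\<Sum>e\<in>D v. \<Sum>j\<in>e-{v}. \<Sum>f\<in>D j - {e}. g e j f)"
proof -
  have "(\<Sum>(e,j,f)\<in>Trip v. g e j f) = (\<Sum>e\<in>D v. \<Sum>(j,f)\<in>Sigma (e-{v}) (\<lambda>j. D j - {e}). g e j f)"
    unfolding Trip_def
    by (rule sum.Sigma[symmetric]) (auto simp: D_def finE fin_e)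
  also have "\<dots> = (\<Sum>e\<in>D v. \<Sum>j\<in>e-{v}. \<Sum>f\<in>D j - {e}. g e j f)"
  proof (rule sum.cong[OF refl])
    fix e assume "e \<in> D v"
    hence "finite e" using fin_e by (simp add: D_def)
    thus "(\<Sum>(j,f)\<in>Sigma (e-{v}) (\<lambda>j. D j - {e}). g e j f) = (\<Sum>j\<in>e-{v}. \<Sum>f\<in>D j - {e}. g e j f)"
      by (subst sum.Sigma[symmetric]) (auto simp: finD)
  qed
  finally show ?thesis .
qed

lemma E2:
  fixes x :: "'a \<Rightarrow> complex" and \<nu> :: complex
  assumes ev: "\<forall>i\<in>V. (\<Sum>e\<in>D i. \<Sum>j\<in>e-{i}. x j) = \<nu> * x i" and vV: "v \<in> V"
  shows "\<nu> * \<nu> * x v - (of_nat k - 2) * \<nu> * x v =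
     (of_nat k - 1) * of_nat (card (D v)) * x v + (\<Sum>(e,j,f)\<in>Trip v. \<Sum>l\<in>f-{j}. x l)"
proof -
  define K :: complex where "K = of_nat k"
  have a0: "\<nu> * \<nu> * x v = \<nu> * (\<Sum>e\<in>D v. \<Sum>j\<in>e-{v}. x j)"
    using ev vV by simp
  have a: "\<nu> * \<nu> * x v = (\<Sum>e\<in>D v. \<Sum>j\<in>e-{v}. \<nu> * x j)"
    unfolding a0 by (simp add: sum_distrib_left)
  have b: "\<nu> * x j = (\<Sum>l\<in>e-{j}. x l) + (\<Sum>f\<in>D j - {e}. \<Sum>l\<in>f-{j}. x l)"
    if e: "e \<in> D v" "j \<in> e - {v}" for e j
  proof -
    have jV: "j \<in> V" using e subV unfolding D_def by blast
    have "e \<in> D j" using e unfolding D_def by auto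
    hence "(\<Sum>f\<in>D j. \<Sum>l\<in>f-{j}. x l) = (\<Sum>l\<in>e-{j}. x l) + (\<Sum>f\<in>D j - {e}. \<Sum>l\<in>f-{j}. x l)"
      using finD by (simp add: sum.remove)
    thus ?thesis using ev jV by simp
  qed
  have c: "(\<Sum>j\<in>e-{v}. \<Sum>l\<in>e-{j}. x l) = (K - 2) * (\<Sum>j\<in>e-{v}. x j) + (K - 1) * x v"
    if e: "e \<in> D v" for e
  proof -
    have eE: "e \<in> E" "v \<in> e" using e unfolding D_def by auto
    have fe: "finite e" using fin_e eE by simp
    define s where "s = (\<Sum>l\<in>e. x l)"
    have s1: "(\<Sum>l\<in>e-{j}. x l) = s - x j" if "j \<in> e" for j
      unfolding s_def using fe that by (simp add: sum_diff1)
    have "(\<Sum>j\<in>e-{v}. \<Sum>l\<in>e-{j}. x l) = (\<Sum>j\<in>e-{v}. s - x j)"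
      using s1 by (intro sum.cong) auto
    also have "\<dots> = of_nat (card (e - {v})) * s - (\<Sum>j\<in>e-{v}. x j)"
      by (simp add: sum_subtractf)
    also have "of_nat (card (e - {v})) = K - 1"
      using card_minus[OF eE] k3 unfolding K_def by (simp add: of_nat_diff)
    finally have L: "(\<Sum>j\<in>e-{v}. \<Sum>l\<in>e-{j}. x l) = (K - 1) * s - (\<Sum>j\<in>e-{v}. x j)" .
    have hs: "s = x v + (\<Sum>j\<in>e-{v}. x j)" using s1[OF eE(2)] by simp
    show ?thesis using L unfolding hs by (simp add: algebra_simps)
  qed
  have "\<nu> * \<nu> * x v = (\<Sum>e\<in>D v. (\<Sum>j\<in>e-{v}. \<Sum>l\<in>e-{j}. x l) + (\<Sum>j\<in>e-{v}. \<Sum>f\<in>D j - {e}. \<Sum>l\<in>f-{j}. x l))"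
    unfolding a using b by (simp add: sum.distrib)
  also have "\<dots> = (\<Sum>e\<in>D v. (K - 2) * (\<Sum>j\<in>e-{v}. x j) + (K - 1) * x v + (\<Sum>j\<in>e-{v}. \<Sum>f\<in>D j - {e}. \<Sum>l\<in>f-{j}. x l))"
    using c by (intro sum.cong) auto
  also have "\<dots> = (K - 2) * (\<Sum>e\<in>D v. \<Sum>j\<in>e-{v}. x j) + of_nat (card (D v)) * ((K - 1) * x v) + (\<Sum>e\<in>D v. \<Sum>j\<in>e-{v}. \<Sum>f\<in>D j - {e}. \<Sum>l\<in>f-{j}. x l)"
    by (simp add: sum.distrib sum_distrib_left)
  also have "(\<Sum>e\<in>D v. \<Sum>j\<in>e-{v}. x j) = \<nu> * x v" using ev vV by simp
  also have "(\<Sum>e\<in>D v. \<Sum>j\<in>e-{v}. \<Sum>f\<in>D j - {e}. \<Sum>l\<in>f-{j}. x l) = (\<Sum>(e,j,f)\<in>Trip v. \<Sum>l\<in>f-{j}. x l)"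
    by (rule trip_sum[symmetric])
  finally show ?thesis unfolding K_def by (simp add: algebra_simps)
qed

end

lemma quad_le:
  fixes b c t :: real
  assumes "0 \<le> b" "0 \<le> c" "0 \<le> t" "t * t - b * t \<le> c"
  shows "t \<le> (b + sqrt (b * b + 4 * c)) / 2"
proof (rule ccontr)
  define s where "s = sqrt (b * b + 4 * c)"
  have ss: "s * s = b * b + 4 * c" unfolding s_def using assms by simp
  have sb: "b \<le> s" unfolding s_def by (rule real_le_rsqrt) (use assms in \<open>simp add: power2_eq_square\<close>)
  assume "\<not> t \<le> (b + sqrt (b * b + 4 * c)) / 2"
  hence tr: "(b + s) / 2 < t" unfolding s_def by simp
  have s0: "0 \<le> s" unfolding s_def using assms by simp
  have "0 < (t - (b + s) / 2) * (t - (b - s) / 2)" using tr sb s0 by (intro mult_pos_pos) auto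
  also have "(t - (b + s) / 2) * (t - (b - s) / 2) = t * t - b * t - c" using ss by (simp add: field_simps)
  finally show False using assms by simp
qed

lemma quad_ge:
  fixes b c t :: real
  assumes "0 \<le> b" "0 \<le> c" "(b + sqrt (b * b + 4 * c)) / 2 \<le> t"
  shows "c \<le> t * t - b * t"
proof -
  define s where "s = sqrt (b * b + 4 * c)"
  have ss: "s * s = b * b + 4 * c" unfolding s_def using assms by simp
  have sb: "b \<le> s" unfolding s_def by (rule real_le_rsqrt) (use assms in \<open>simp add: power2_eq_square\<close>)
  have tr: "(b + s) / 2 \<le> t" using assms unfolding s_def by simp
  have s0: "0 \<le> s" unfolding s_def using assms by simp
  have "0 \<le> (t - (b + s) / 2) * (t - (b - s) / 2)" using tr sb s0 by (intro mult_nonneg_nonneg) auto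
  also have "(t - (b + s) / 2) * (t - (b - s) / 2) = t * t - b * t - c" using ss by (simp add: field_simps)
  finally show ?thesis by simp
qed

lemma argmax_ex:
  fixes x :: "'a \<Rightarrow> complex"
  assumes "finite V" "\<exists>i\<in>V. x i \<noteq> 0"
  shows "\<exists>v\<in>V. x v \<noteq> 0 \<and> (\<forall>u\<in>V. cmod (x u) \<le> cmod (x v))"
proof -
  define M where "M = Max ((\<lambda>u. cmod (x u)) ` V)"
  have ne: "V \<noteq> {}" using assms by auto
  have "M \<in> (\<lambda>u. cmod (x u)) ` V" unfolding M_def using assms ne by (intro Max_in) auto
  then obtain v where v: "v \<in> V" "cmod (x v) = M" by auto
  have le: "\<forall>u\<in>V. cmod (x u) \<le> M" unfolding M_def using assms by auto
  obtain i where i: "i \<in> V" "x i \<noteq> 0" using assms by auto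
  have "0 < cmod (x i)" using i by simp
  hence "x v \<noteq> 0" using le i v by force
  thus ?thesis using v le by auto
qed

definition lamk :: "nat \<Rightarrow> nat \<Rightarrow> real" where
  "lamk k m = ((real k - 2) + sqrt ((real k - 2) * (real k - 2) + 4 * ((real k - 1) * real m))) / 2"

context hyp begin

lemma cm1: "cmod (of_nat k - 1 :: complex) = real k - 1"
proof -
  have a: "complex_of_real (real k - 1) = of_nat k - 1" by simp
  have "cmod (complex_of_real (real k - 1)) = real k - 1" using k3 by (subst norm_of_real) simp
  thus ?thesis unfolding a .
qed

lemma cm2: "cmod (of_nat k - 2 :: complex) = real k - 2"
proof -
  have a: "complex_of_real (real k - 2) = of_nat k - 2" by simp
  have "cmod (complex_of_real (real k - 2)) = real k - 2" using k3 by (subst norm_of_real) simp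
  thus ?thesis unfolding a .
qed

lemma bound_at:
  fixes x :: "'a \<Rightarrow> complex" and \<nu> :: complex
  assumes ev: "\<forall>i\<in>V. (\<Sum>e\<in>D i. \<Sum>j\<in>e-{i}. x j) = \<nu> * x i" and vV: "v \<in> V"
    and mx: "\<forall>u\<in>V. cmod (x u) \<le> cmod (x v)"
  shows "cmod (\<nu> * \<nu> - (of_nat k - 2) * \<nu>) * cmod (x v) \<le>
           (real k - 1) * real (card (D v)) * cmod (x v) + (\<Sum>(e,j,f)\<in>Trip v. \<Sum>l\<in>f-{j}. cmod (x l))"
    and "(\<Sum>(e,j,f)\<in>Trip v. \<Sum>l\<in>f-{j}. cmod (x l)) \<le> real (card (Trip v)) * (real k - 1) * cmod (x v)"
proof -
  define g where "g = (\<lambda>(e::'a set,j::'a,f::'a set). \<Sum>l\<in>f-{j}. x l)"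
  define h where "h = (\<lambda>(e::'a set,j::'a,f::'a set). \<Sum>l\<in>f-{j}. cmod (x l))"
  have TS: "(\<Sum>(e,j,f)\<in>Trip v. \<Sum>l\<in>f-{j}. x l) = sum g (Trip v)" unfolding g_def by simp
  have HS: "(\<Sum>(e,j,f)\<in>Trip v. \<Sum>l\<in>f-{j}. cmod (x l)) = sum h (Trip v)" unfolding h_def by simp
  have "cmod (sum g (Trip v)) \<le> (\<Sum>t\<in>Trip v. cmod (g t))" by (rule norm_sum)
  also have "\<dots> \<le> sum h (Trip v)"
  proof (rule sum_mono)
    fix t assume "t \<in> Trip v"
    obtain e j f where t: "t = (e, j, f)" by (cases t) auto
    show "cmod (g t) \<le> h t" unfolding t g_def h_def by (simp add: norm_sum)
  qed
  finally have nTS: "cmod (sum g (Trip v)) \<le> sum h (Trip v)" .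
  have k1: "(of_nat k - 1 :: complex) = complex_of_real (real k - 1)" by simp
  have "cmod (\<nu> * \<nu> - (of_nat k - 2) * \<nu>) * cmod (x v) = cmod (\<nu> * \<nu> * x v - (of_nat k - 2) * \<nu> * x v)"
    by (simp add: norm_mult[symmetric] algebra_simps)
  also have "\<dots> = cmod ((of_nat k - 1) * of_nat (card (D v)) * x v + sum g (Trip v))"
    using E2[OF ev vV] TS by simp
  also have "\<dots> \<le> cmod ((of_nat k - 1) * of_nat (card (D v)) * x v) + cmod (sum g (Trip v))"
    by (rule norm_triangle_ineq)
  also have "cmod ((of_nat k - 1) * of_nat (card (D v)) * x v) = (real k - 1) * real (card (D v)) * cmod (x v)"
    using cm1 by (simp add: norm_mult)
  finally show "cmod (\<nu> * \<nu> - (of_nat k - 2) * \<nu>) * cmod (x v) \<le>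
           (real k - 1) * real (card (D v)) * cmod (x v) + (\<Sum>(e,j,f)\<in>Trip v. \<Sum>l\<in>f-{j}. cmod (x l))"
    using nTS HS by simp
  have "sum h (Trip v) \<le> (\<Sum>t\<in>Trip v. (real k - 1) * cmod (x v))"
  proof (rule sum_mono)
    fix t assume tT: "t \<in> Trip v"
    obtain e j f where t: "t = (e, j, f)" by (cases t) auto
    have fE: "f \<in> E" "j \<in> f" using TripD tT t by auto
    have "(\<Sum>l\<in>f-{j}. cmod (x l)) \<le> (\<Sum>l\<in>f-{j}. cmod (x v))"
      using mx subV[OF fE(1)] by (intro sum_mono) auto
    also have "\<dots> = (real k - 1) * cmod (x v)" using card_minus[OF fE] k3 by (simp add: of_nat_diff)
    finally show "h t \<le> (real k - 1) * cmod (x v)" unfolding t h_def by simp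
  qed
  thus "(\<Sum>(e,j,f)\<in>Trip v. \<Sum>l\<in>f-{j}. cmod (x l)) \<le> real (card (Trip v)) * (real k - 1) * cmod (x v)"
    using HS by simp
qed

lemma c_lower:
  fixes \<nu> :: complex
  shows "cmod \<nu> * cmod \<nu> - (real k - 2) * cmod \<nu> \<le> cmod (\<nu> * \<nu> - (of_nat k - 2) * \<nu>)"
proof -
  have k2: "(of_nat k - 2 :: complex) = complex_of_real (real k - 2)" by simp
  have "cmod (\<nu> * \<nu>) - cmod ((of_nat k - 2) * \<nu>) \<le> cmod (\<nu> * \<nu> - (of_nat k - 2) * \<nu>)"
    by (rule norm_triangle_ineq2)
  moreover have "cmod ((of_nat k - 2) * \<nu>) = (real k - 2) * cmod \<nu>" using cm2 by (simp add: norm_mult)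
  ultimately show ?thesis using cm2 by (simp add: norm_mult)
qed

abbreviation "lam \<equiv> lamk k"

abbreviation "mm \<equiv> (card V - 1) div (k - 1)"

lemma core_bound:
  fixes x :: "'a \<Rightarrow> complex" and \<nu> :: complex
  assumes ev: "\<forall>i\<in>V. (\<Sum>e\<in>D i. \<Sum>j\<in>e-{i}. x j) = \<nu> * x i" and vV: "v \<in> V"
    and mx: "\<forall>u\<in>V. cmod (x u) \<le> cmod (x v)" and nz: "x v \<noteq> 0"
  shows "cmod (\<nu> * \<nu> - (of_nat k - 2) * \<nu>) \<le> (real k - 1) * real (T v)"
proof -
  note b = bound_at[OF ev vV mx]
  have "cmod (\<nu> * \<nu> - (of_nat k - 2) * \<nu>) * cmod (x v) \<le> ((real k - 1) * real (T v)) * cmod (x v)"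
    using b unfolding T_def by (simp add: algebra_simps)
  thus ?thesis using nz by simp
qed

lemma radius_bound:
  assumes "hg_eigenvalue V E \<mu>"
  shows "cmod \<mu> \<le> lam mm / (real k - 1)"
proof -
  obtain x where x: "\<exists>i\<in>V. x i \<noteq> 0" "\<forall>i\<in>V. (\<Sum>e\<in>D i. \<Sum>j\<in>e-{i}. x j) = (kap * \<mu>) * x i"
    using eig_eq[OF assms] by blast
  obtain v where v: "v \<in> V" "x v \<noteq> 0" "\<forall>u\<in>V. cmod (x u) \<le> cmod (x v)" using argmax_ex[OF finV x(1)] by blast
  define \<nu> where "\<nu> = kap * \<mu>"
  have "cmod (\<nu> * \<nu> - (of_nat k - 2) * \<nu>) \<le> (real k - 1) * real (T v)"
    using core_bound[of x \<nu> v] x v unfolding \<nu>_def by simp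
  also have "\<dots> \<le> (real k - 1) * real mm" using T_le[OF v(1)] k3 by (intro mult_left_mono) auto
  finally have "cmod \<nu> * cmod \<nu> - (real k - 2) * cmod \<nu> \<le> (real k - 1) * real mm"
    using c_lower[of \<nu>] by linarith
  hence "cmod \<nu> \<le> lam mm" unfolding lamk_def using k3 by (intro quad_le) auto
  moreover have "cmod \<nu> = (real k - 1) * cmod \<mu>" unfolding \<nu>_def using cm1 by (simp add: norm_mult)
  ultimately show ?thesis using k3 by (simp add: field_simps)
qed

lemma eq_case:
  fixes x :: "'a \<Rightarrow> complex" and \<nu> :: complex
  assumes ev: "\<forall>i\<in>V. (\<Sum>e\<in>D i. \<Sum>j\<in>e-{i}. x j) = \<nu> * x i" and vV: "v \<in> V"
    and mx: "\<forall>u\<in>V. cmod (x u) \<le> cmod (x v)" and nz: "x v \<noteq> 0"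
    and big: "(real k - 1) * real mm \<le> cmod (\<nu> * \<nu> - (of_nat k - 2) * \<nu>)"
  shows "T v = mm" and "\<And>e j f l. (e, j, f) \<in> Trip v \<Longrightarrow> l \<in> f - {j} \<Longrightarrow> cmod (x l) = cmod (x v)"
proof -
  define M where "M = cmod (x v)"
  have M0: "0 < M" using nz unfolding M_def by simp
  define S1 where "S1 = (\<Sum>(e,j,f)\<in>Trip v. \<Sum>l\<in>f-{j}. cmod (x l))"
  note b = bound_at[OF ev vV mx, folded M_def S1_def]
  have k1: "0 < real k - 1" using k3 by simp
  have Tle: "real (T v) \<le> real mm" using T_le[OF vV] by simp
  have chain: "(real k - 1) * real mm * M \<le> (real k - 1) * real (card (D v)) * M + S1"
    using big b(1) M0 by (meson mult_right_mono less_imp_le order_trans)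
  have "(real k - 1) * real mm * M \<le> (real k - 1) * real (T v) * M"
    using chain b(2) unfolding T_def by (simp add: algebra_simps)
  hence "real mm \<le> real (T v)" using M0 k1 by simp
  thus "T v = mm" using Tle by simp
  hence "real mm = real (card (D v)) + real (card (Trip v))" unfolding T_def by simp
  hence "(real k - 1) * real mm * M = (real k - 1) * real (card (D v)) * M + real (card (Trip v)) * (real k - 1) * M"
    by (simp add: algebra_simps)
  hence S1eq: "S1 = real (card (Trip v)) * (real k - 1) * M"
    using chain b(2) by linarith
  define h where "h = (\<lambda>(e::'a set,j::'a,f::'a set). \<Sum>l\<in>f-{j}. (M - cmod (x l)))"
  have hnn: "\<forall>t\<in>Trip v. 0 \<le> h t"
  proof
    fix t assume tT: "t \<in> Trip v"
    obtain e j f where t: "t = (e, j, f)" by (cases t) auto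
    have "f \<in> E" using TripD tT t by auto
    hence "\<forall>l\<in>f-{j}. 0 \<le> M - cmod (x l)" using mx subV M_def by fastforce
    thus "0 \<le> h t" unfolding t h_def by (auto intro!: sum_nonneg)
  qed
  have hsum: "sum h (Trip v) = real (card (Trip v)) * (real k - 1) * M - S1"
  proof -
    have "sum h (Trip v) = (\<Sum>t\<in>Trip v. (real k - 1) * M - (case t of (e,j,f) \<Rightarrow> \<Sum>l\<in>f-{j}. cmod (x l)))"
    proof (rule sum.cong[OF refl])
      fix t assume tT: "t \<in> Trip v"
      obtain e j f where t: "t = (e, j, f)" by (cases t) auto
      have fE: "f \<in> E" "j \<in> f" using TripD tT t by auto
      have "h t = (\<Sum>l\<in>f-{j}. M) - (\<Sum>l\<in>f-{j}. cmod (x l))" unfolding t h_def by (simp add: sum_subtractf)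
      also have "(\<Sum>l\<in>f-{j}. M) = (real k - 1) * M" using card_minus[OF fE] k3 by (simp add: of_nat_diff)
      finally show "h t = (real k - 1) * M - (case t of (e,j,f) \<Rightarrow> \<Sum>l\<in>f-{j}. cmod (x l))" unfolding t by simp
    qed
    also have "\<dots> = real (card (Trip v)) * ((real k - 1) * M) - S1"
      unfolding S1_def by (simp add: sum_subtractf case_prod_beta)
    finally show ?thesis by simp
  qed
  hence h0: "sum h (Trip v) = 0" using S1eq by simp
  have hz: "\<forall>t\<in>Trip v. h t = 0" using sum_nonneg_eq_0_iff[OF finTrip[of v], where f=h] hnn h0 by blast
  fix e j f l assume ej: "(e, j, f) \<in> Trip v" "l \<in> f - {j}"
  have fE: "f \<in> E" "j \<in> f" using TripD ej by auto
  have fin: "finite (f - {j})" using fin_e fE by simp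
  have "(\<Sum>l\<in>f-{j}. (M - cmod (x l))) = 0" using hz ej unfolding h_def by auto
  moreover have "\<forall>l\<in>f-{j}. 0 \<le> M - cmod (x l)" using mx subV fE M_def by auto
  ultimately have "\<forall>l\<in>f-{j}. M - cmod (x l) = 0" using sum_nonneg_eq_0_iff[OF fin, of "\<lambda>l. M - cmod (x l)"] by blast
  thus "cmod (x l) = cmod (x v)" using ej M_def by auto
qed

end

context hyp begin

lemma CL:
  assumes conn: "hg_connected V E" and uV: "u \<in> V" and gE: "g \<in> E" and ug: "u \<notin> g"
  shows "Trip u \<noteq> {}"
proof (cases "\<exists>j\<in>g. \<exists>e\<in>D u. j \<in> e")
  case True
  then obtain j e where je: "j \<in> g" "e \<in> D u" "j \<in> e" by blast
  have "j \<noteq> u" using je ug by auto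
  moreover have "g \<noteq> e" using je ug unfolding D_def by auto
  ultimately have "(e, j, g) \<in> Trip u" using je gE unfolding Trip_def D_def by auto
  thus ?thesis by blast
next
  case False
  have "card g = k" using unif gE by simp
  hence "g \<noteq> {}" using k3 by auto
  then obtain w where w: "w \<in> g" by blast
  have wV: "w \<in> V" using subV gE w by blast
  have wu: "w \<noteq> u" using w ug by auto
  obtain es where es: "es \<noteq> []" "set es \<subseteq> E" "u \<in> hd es" "w \<in> last es"
      "\<forall>i. Suc i < length es \<longrightarrow> es ! i \<inter> es ! Suc i \<noteq> {}"
  proof -
    have "u = w \<or> (\<exists>es. es \<noteq> [] \<and> set es \<subseteq> E \<and> u \<in> hd es \<and> w \<in> last es \<and>
        (\<forall>i. Suc i < length es \<longrightarrow> es ! i \<inter> es ! Suc i \<noteq> {}))"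
      using conn[unfolded hg_connected_def, rule_format, OF uV wV] .
    thus thesis using that wu by blast
  qed
  have lastE: "last es \<in> E" using es by auto
  have ul: "u \<notin> last es"
  proof
    assume "u \<in> last es"
    hence "last es \<in> D u" using lastE unfolding D_def by auto
    thus False using False w es(4) by blast
  qed
  define P where "P i \<longleftrightarrow> i < length es \<and> u \<notin> es ! i" for i
  have "P (length es - 1)" unfolding P_def using ul es(1) by (simp add: last_conv_nth)
  define i0 where "i0 = (LEAST i. P i)"
  have Pi0: "P i0" unfolding i0_def by (rule LeastI) fact
  have i00: "i0 \<noteq> 0"
  proof
    assume "i0 = 0"
    thus False using Pi0 es(1,3) unfolding P_def by (simp add: hd_conv_nth)
  qed
  define i1 where "i1 = i0 - 1"
  have si: "Suc i1 = i0" using i00 unfolding i1_def by simp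
  have "i1 < i0" using si by simp
  hence "\<not> P i1" using not_less_Least[of i1 P] unfolding i0_def by blast
  hence ui1: "u \<in> es ! i1" using Pi0 si unfolding P_def by auto
  have len: "Suc i1 < length es" using Pi0 si unfolding P_def by simp
  hence "es ! i1 \<inter> es ! Suc i1 \<noteq> {}" using es(5) by blast
  hence "es ! i1 \<inter> es ! i0 \<noteq> {}" using si by simp
  then obtain j where j: "j \<in> es ! i1" "j \<in> es ! i0" by blast
  have "es ! i1 \<in> set es" "es ! i0 \<in> set es" using len si by (auto intro!: nth_mem)
  hence E1: "es ! i1 \<in> E" "es ! i0 \<in> E" using es(2) by auto
  have "j \<noteq> u" using j Pi0 unfolding P_def by auto
  moreover have "es ! i0 \<noteq> es ! i1" using ui1 Pi0 unfolding P_def by auto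
  ultimately have "(es ! i1, j, es ! i0) \<in> Trip u" using E1 j ui1 unfolding Trip_def D_def by auto
  thus ?thesis by blast
qed

lemma radius_strict:
  assumes conn: "hg_connected V E" and ev0: "hg_eigenvalue V E \<mu>"
    and ge: "lam mm / (real k - 1) \<le> cmod \<mu>"
  shows "\<exists>c. \<forall>e\<in>E. c \<in> e"
proof (rule ccontr)
  assume nw: "\<not> (\<exists>c. \<forall>e\<in>E. c \<in> e)"
  obtain x where x: "\<exists>i\<in>V. x i \<noteq> 0" "\<forall>i\<in>V. (\<Sum>e\<in>D i. \<Sum>j\<in>e-{i}. x j) = (kap * \<mu>) * x i"
    using eig_eq[OF ev0] by blast
  obtain v where v: "v \<in> V" "x v \<noteq> 0" "\<forall>u\<in>V. cmod (x u) \<le> cmod (x v)" using argmax_ex[OF finV x(1)] by blast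
  define \<nu> where "\<nu> = kap * \<mu>"
  have ev: "\<forall>i\<in>V. (\<Sum>e\<in>D i. \<Sum>j\<in>e-{i}. x j) = \<nu> * x i" using x unfolding \<nu>_def by simp
  have cn: "cmod \<nu> = (real k - 1) * cmod \<mu>" unfolding \<nu>_def using cm1 by (simp add: norm_mult)
  have "lam mm \<le> cmod \<nu>" using ge cn k3 by (simp add: field_simps)
  hence "(real k - 1) * real mm \<le> cmod \<nu> * cmod \<nu> - (real k - 2) * cmod \<nu>"
    unfolding lamk_def using k3 by (intro quad_ge) auto
  hence big: "(real k - 1) * real mm \<le> cmod (\<nu> * \<nu> - (of_nat k - 2) * \<nu>)"
    using c_lower[of \<nu>] by linarith
  have good: "T u = mm \<and> (\<forall>e j f l. (e, j, f) \<in> Trip u \<longrightarrow> l \<in> f - {j} \<longrightarrow> cmod (x l) = cmod (x v))"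
    if u: "u \<in> V" "cmod (x u) = cmod (x v)" for u
  proof -
    have mxu: "\<forall>w\<in>V. cmod (x w) \<le> cmod (x u)" using v u by simp
    have nzu: "x u \<noteq> 0" using u v by auto
    show ?thesis using eq_case[OF ev u(1) mxu nzu big] u by auto
  qed
  obtain g where g: "g \<in> E" "v \<notin> g" using nw by blast
  obtain e j f where t: "(e, j, f) \<in> Trip v" using CL[OF conn v(1) g] by auto
  note tt = TripD[OF t]
  have cfj: "card (f - {j}) = k - 1" using card_minus tt by blast
  have "f - {j} \<noteq> {}"
  proof
    assume h: "f - {j} = {}"
    have "card (f - {j}) = 0" unfolding h by simp
    thus False using cfj k3 by simp
  qed
  then obtain l where l: "l \<in> f - {j}" by blast
  have lV: "l \<in> V" using l subV tt by blast
  have xl: "cmod (x l) = cmod (x v)" using good[OF v(1) refl] t l by blast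
  have jV: "j \<in> V" using subV tt by blast
  obtain g2 where g2: "g2 \<in> E" "j \<notin> g2" using nw by blast
  obtain e2 j2 g3 where t2: "(e2, j2, g3) \<in> Trip j" using CL[OF conn jV g2] by auto
  note tt2 = TripD[OF t2]
  have jg3: "j \<notin> g3" using D4[OF t2] .
  show False
  proof (cases "e2 = e")
    case True
    have le: "l \<notin> e"
    proof
      assume "l \<in> e"
      thus False using C2[of e f l j] tt l by auto
    qed
    have a1: "f \<in> E" "e \<in> E" "g3 \<in> E" using tt tt2 by auto
    have a2: "l \<in> f" "j \<in> f" "j \<in> e" "j2 \<in> e" "j2 \<in> g3" using tt tt2 True l by auto
    have a3: "f \<noteq> e" "e \<noteq> g3" "l \<noteq> j" "j \<noteq> j2" using tt tt2 True l by auto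
    have "T l + 1 \<le> mm" using FAR[OF lV a1 a2 a3 le jg3] .
    thus False using good[OF lV xl] by simp
  next
    case False
    have ve2: "v \<notin> e2"
    proof
      assume "v \<in> e2"
      thus False using C2[of e e2 v j] tt tt2 False by auto
    qed
    have a1: "e \<in> E" "e2 \<in> E" "g3 \<in> E" using tt tt2 by auto
    have a2: "v \<in> e" "j \<in> e" "j \<in> e2" "j2 \<in> e2" "j2 \<in> g3" using tt tt2 by auto
    have a3: "e \<noteq> e2" "e2 \<noteq> g3" "v \<noteq> j" "j \<noteq> j2" using tt tt2 False by auto
    have "T v + 1 \<le> mm" using FAR[OF v(1) a1 a2 a3 ve2 jg3] .
    thus False using good[OF v(1) refl] by simp
  qed
qed

end

lemma lamk_eq:
  assumes "1 \<le> k"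
  shows "lamk k m * lamk k m - (real k - 2) * lamk k m = (real k - 1) * real m"
proof -
  define b where "b = real k - 2"
  define c where "c = (real k - 1) * real m"
  define s where "s = sqrt (b * b + 4 * c)"
  have c0: "0 \<le> c" unfolding c_def using assms by simp
  have ss: "s * s = b * b + 4 * c" unfolding s_def using c0 by simp
  have L: "lamk k m = (b + s) / 2" unfolding lamk_def b_def c_def s_def by simp
  show ?thesis unfolding L using ss unfolding b_def[symmetric] c_def[symmetric]
    by (simp add: field_simps)
qed

lemma lamk_gt:
  assumes "2 \<le> k" "0 < m"
  shows "real k - 2 < lamk k m"
proof -
  define b where "b = real k - 2"
  define c where "c = (real k - 1) * real m"
  have b0: "0 \<le> b" unfolding b_def using assms by simp
  have c0: "0 < c" unfolding c_def using assms by simp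
  have "b < sqrt (b * b + 4 * c)" by (rule real_less_rsqrt) (use c0 in \<open>simp add: power2_eq_square\<close>)
  thus ?thesis unfolding lamk_def b_def[symmetric] c_def[symmetric] by simp
qed

lemma lamk_nonneg:
  assumes "2 \<le> k"
  shows "0 \<le> lamk k m"
  unfolding lamk_def using assms by (intro divide_nonneg_pos add_nonneg_nonneg) auto

context hyp begin

lemma windmill_eig:
  assumes cV: "c \<in> V" and call: "\<forall>e\<in>E. c \<in> e" and Ene: "E \<noteq> {}"
  shows "hg_eigenvalue V E (complex_of_real (lam (card E) / (real k - 1)))"
proof -
  define L where "L = lam (card E)"
  have mpos: "0 < card E" using Ene finE by (simp add: card_gt_0_iff)
  have Lgt: "real k - 2 < L" unfolding L_def using lamk_gt[OF _ mpos] k3 by simp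
  have Leq: "L * L - (real k - 2) * L = (real k - 1) * real (card E)" unfolding L_def using lamk_eq k3 by simp
  define x where "x u = (if u = c then complex_of_real (L - (real k - 2)) else if (\<exists>e\<in>E. u \<in> e) then 1 else 0)" for u
  have k1: "complex_of_nat (k - 1) = complex_of_real (real k - 1)" using k3 by (simp add: of_nat_diff)
  have k2: "complex_of_nat (k - 2) = complex_of_real (real k - 2)" using k3 by (simp add: of_nat_diff)
  have key: "(\<Sum>e\<in>D i. \<Sum>j\<in>e-{i}. x j) = complex_of_real L * x i" if iV: "i \<in> V" for i
  proof (cases "i = c")
    case True
    have Dc: "D i = E" using call True unfolding D_def by auto
    have inner: "(\<Sum>j\<in>e-{i}. x j) = complex_of_real (real k - 1)" if e: "e \<in> E" for e
    proof -
      have "(\<Sum>j\<in>e-{i}. x j) = (\<Sum>j\<in>e-{i}. 1)" using e True unfolding x_def by (intro sum.cong) auto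
      also have "\<dots> = of_nat (k - 1)" using card_minus[OF e, of c] call e True by simp
      finally show ?thesis using k1 by simp
    qed
    have "(\<Sum>e\<in>D i. \<Sum>j\<in>e-{i}. x j) = (\<Sum>e\<in>E. complex_of_real (real k - 1))"
      unfolding Dc using inner by (rule sum.cong[OF refl])
    also have "\<dots> = complex_of_real ((real k - 1) * real (card E))" by simp
    also have "\<dots> = complex_of_real (L * (L - (real k - 2)))"
    proof -
      have Leq2: "(real k - 1) * real (card E) = L * (L - (real k - 2))" using Leq by (simp add: algebra_simps)
      show ?thesis by (simp only: Leq2)
    qed
    also have "\<dots> = complex_of_real L * x i" unfolding x_def using True by simp
    finally show ?thesis .
  next
    case False
    note ic = False
    show ?thesis
    proof (cases "\<exists>e\<in>E. i \<in> e")
      case True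
      then obtain e0 where e0: "e0 \<in> E" "i \<in> e0" by blast
      have Di: "D i = {e0}"
      proof
        show "D i \<subseteq> {e0}"
        proof
          fix e assume e: "e \<in> D i"
          show "e \<in> {e0}"
          proof (rule ccontr)
            assume "e \<notin> {e0}"
            thus False using C2[of e e0 c i] e e0 call ic unfolding D_def by auto
          qed
        qed
        show "{e0} \<subseteq> D i" using e0 unfolding D_def by auto
      qed
      have ce: "c \<in> e0 - {i}" using call e0 ic by auto
      have fin: "finite (e0 - {i})" using fin_e e0 by simp
      have "(\<Sum>j\<in>e0-{i}. x j) = x c + (\<Sum>j\<in>e0-{i}-{c}. x j)"
        using sum.remove[OF fin ce] by simp
      also have "(\<Sum>j\<in>e0-{i}-{c}. x j) = (\<Sum>j\<in>e0-{i}-{c}. 1)"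
        unfolding x_def using e0 by (intro sum.cong) auto
      also have "\<dots> = of_nat (card (e0 - {i} - {c}))" by simp
      also have "card (e0 - {i} - {c}) = k - 2"
      proof -
        have "card (e0 - {i} - {c}) = card (e0 - {i}) - 1" using ce fin by simp
        thus ?thesis using card_minus[OF e0] by simp
      qed
      finally have "(\<Sum>j\<in>e0-{i}. x j) = complex_of_real L"
        unfolding x_def using k2 by simp
      moreover have "x i = 1" unfolding x_def using ic True by simp
      ultimately show ?thesis unfolding Di by simp
    next
      case False
      have "D i = {}" using False unfolding D_def by auto
      moreover have "x i = 0" unfolding x_def using ic False by simp
      ultimately show ?thesis by simp
    qed
  qed
  have xc: "x c = complex_of_real (L - (real k - 2))" unfolding x_def by simp
  have "complex_of_real (L - (real k - 2)) \<noteq> 0" using Lgt by (simp only: of_real_eq_0_iff)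
  hence nz: "x c \<noteq> 0" using xc by simp
  show ?thesis unfolding hg_eigenvalue_def
  proof (intro exI conjI)
    show "\<exists>i\<in>V. x i \<noteq> 0" using cV nz by blast
    show "\<forall>i\<in>V. (\<Sum>j\<in>V. complex_of_real (adj E i j) * x j) = complex_of_real (lam (card E) / (real k - 1)) * x i"
    proof
      fix i assume iV: "i \<in> V"
      have "(\<Sum>j\<in>V. complex_of_real (adj E i j) * x j) = complex_of_real L * x i / kap"
        using adj_form[OF iV, of x] key[OF iV] by simp
      thus "(\<Sum>j\<in>V. complex_of_real (adj E i j) * x j) = complex_of_real (lam (card E) / (real k - 1)) * x i"
        unfolding L_def by (simp add: field_simps)
    qed
  qed
qed

lemma rad_eq:
  assumes cV: "c \<in> V" and call: "\<forall>e\<in>E. c \<in> e" and Ene: "E \<noteq> {}" and mmE: "mm = card E"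
  shows "spectral_radius V E = lam mm / (real k - 1)"
  unfolding spectral_radius_def
proof (rule cSup_eq_maximum)
  have "hg_eigenvalue V E (complex_of_real (lam mm / (real k - 1)))"
    using windmill_eig[OF cV call Ene] mmE by simp
  moreover have "cmod (complex_of_real (lam mm / (real k - 1))) = lam mm / (real k - 1)"
    using lamk_nonneg[of k mm] k3 by (simp only: norm_of_real) simp
  ultimately show "lam mm / (real k - 1) \<in> {cmod \<mu> |\<mu>. hg_eigenvalue V E \<mu>}" by force
  show "\<And>y. y \<in> {cmod \<mu> |\<mu>. hg_eigenvalue V E \<mu>} \<Longrightarrow> y \<le> lam mm / (real k - 1)"
    using radius_bound by blast
qed

lemma windmill_card:
  assumes conn: "hg_connected V E" and cV: "c \<in> V" and call: "\<forall>e\<in>E. c \<in> e"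
  shows "card V = 1 + card E * (k - 1)"
proof -
  have Dc: "D c = E" using call unfolding D_def by auto
  have "V \<subseteq> insert c (WA c)"
  proof
    fix u assume u: "u \<in> V"
    show "u \<in> insert c (WA c)"
    proof (cases "u = c")
      case False
      have "u = c \<or> (\<exists>es. es \<noteq> [] \<and> set es \<subseteq> E \<and> u \<in> hd es \<and> c \<in> last es \<and>
          (\<forall>i. Suc i < length es \<longrightarrow> es ! i \<inter> es ! Suc i \<noteq> {}))"
        using conn[unfolded hg_connected_def, rule_format, OF u cV] .
      then obtain es where es: "es \<noteq> []" "set es \<subseteq> E" "u \<in> hd es" using False by blast
      have "hd es \<in> E" using es by auto
      thus ?thesis using es False Dc unfolding WA_def by auto
    qed simp
  qed
  moreover have "insert c (WA c) \<subseteq> V" using WAB_sub cV by auto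
  ultimately have Veq: "V = insert c (WA c)" by blast
  have "c \<notin> WA c" unfolding WA_def by auto
  hence "card V = Suc (card (WA c))" using Veq finWAB(1) by simp
  thus ?thesis using card_WA Dc by simp
qed

end

definition blk :: "nat \<Rightarrow> nat \<Rightarrow> nat set" where
  "blk d i = {i * d + 1 ..< i * d + d + 1}"

lemma ss_E_eq: "superstar_E n k = (\<lambda>i. insert 0 (blk (k - 1) i)) ` {..<(n - 1) div (k - 1)}"
proof -
  have h: "(i + 1) * d = i * d + d" for i d :: nat by simp
  show ?thesis unfolding superstar_E_def blk_def h by blast
qed

lemma card_blk: "card (blk d i) = d"
  unfolding blk_def by simp

lemma zero_blk: "0 \<notin> blk d i" unfolding blk_def by auto

lemma blk_idx:
  assumes "1 \<le> d" "x \<in> blk d i"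
  shows "(x - 1) div d = i"
proof (rule div_nat_eqI)
  have x: "i * d + 1 \<le> x" "x < i * d + d + 1" using assms unfolding blk_def by auto
  show "d * i \<le> x - 1" using x by (simp add: mult.commute)
  show "x - 1 < d * Suc i" using x by (simp add: mult.commute)
qed

lemma blk_disj: "1 \<le> d \<Longrightarrow> i \<noteq> j \<Longrightarrow> blk d i \<inter> blk d j = {}"
  using blk_idx by blast

lemma blk_mem: "1 \<le> d \<Longrightarrow> i * d + 1 \<in> blk d i"
  unfolding blk_def by auto

lemma blk_inj: "1 \<le> d \<Longrightarrow> inj (\<lambda>i. insert 0 (blk d i))"
proof (rule injI)
  fix i j assume d: "1 \<le> d" and eq: "insert 0 (blk d i) = insert 0 (blk d j)"
  have "i * d + 1 \<in> insert 0 (blk d j)" using eq blk_mem[OF d, of i] by auto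
  hence m: "i * d + 1 \<in> blk d j" by simp
  have "(i * d + 1 - 1) div d = j" by (rule blk_idx[OF d m])
  moreover have "(i * d + 1 - 1) div d = i" by (rule blk_idx[OF d blk_mem[OF d]])
  ultimately show "i = j" by simp
qed

lemma blk_union: "(\<Union>i<m. blk d i) = {1 ..< m * d + 1}"
proof (induction m)
  case (Suc m)
  have "(\<Union>i<Suc m. blk d i) = (\<Union>i<m. blk d i) \<union> blk d m" by (simp add: lessThan_Suc Un_commute)
  also have "\<dots> = {1 ..< m * d + 1} \<union> {m * d + 1 ..< m * d + d + 1}"
    using Suc.IH by (simp add: blk_def)
  also have "\<dots> = {1 ..< m * d + d + 1}" by (rule ivl_disj_un_two(3)) auto
  also have "m * d + d + 1 = Suc m * d + 1" by simp
  finally show ?case .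
qed simp

lemma ss_card: "2 \<le> k \<Longrightarrow> card (superstar_E n k) = (n - 1) div (k - 1)"
proof -
  assume k: "2 \<le> k"
  have "inj_on (\<lambda>i. insert 0 (blk (k - 1) i)) {..<(n - 1) div (k - 1)}"
  proof -
    have "1 \<le> k - 1" using k by simp
    from inj_on_subset[OF blk_inj[OF this] subset_UNIV] show ?thesis .
  qed
  thus ?thesis unfolding ss_E_eq by (simp add: card_image)
qed

lemma ss_center: "\<forall>e\<in>superstar_E n k. (0::nat) \<in> e"
  unfolding ss_E_eq by auto

lemma ss_hyp:
  assumes k3: "3 \<le> k"
  shows "hyp (superstar_V n) (superstar_E n k) k"
proof
  show "finite (superstar_V n)" unfolding superstar_V_def by simp
  fix e assume e: "e \<in> superstar_E n k"
  then obtain i where i: "i < (n - 1) div (k - 1)" "e = insert 0 (blk (k - 1) i)" unfolding ss_E_eq by blast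
  define d where "d = k - 1"
  have "(i + 1) * d \<le> (n - 1) div d * d" using i unfolding d_def by (intro mult_right_mono) auto
  also have "\<dots> \<le> n - 1" by simp
  finally have le: "i * d + d \<le> n - 1" by simp
  have d1: "1 \<le> d" using k3 unfolding d_def by simp
  have "blk d i \<subseteq> {0..<n}" unfolding blk_def using le d1 by auto
  thus "e \<subseteq> superstar_V n" unfolding superstar_V_def i(2) d_def[symmetric] using le d1 by auto
  have "card (insert 0 (blk d i)) = Suc d" using card_blk[of d i] zero_blk[of d i] by (simp add: blk_def)
  thus "card e = k" unfolding i(2) d_def[symmetric] using k3 d_def by simp
next
  show "3 \<le> k" by (rule k3)
next
  have k2: "1 \<le> k - 1" using k3 by simp
  have pw: "x = 0" if pe: "e \<in> superstar_E n k" "e' \<in> superstar_E n k" "e \<noteq> e'" "x \<in> e" "x \<in> e'" for e e' x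
  proof -
    obtain i where i: "e = insert 0 (blk (k - 1) i)" using pe(1) unfolding ss_E_eq by blast
    obtain j where j: "e' = insert 0 (blk (k - 1) j)" using pe(2) unfolding ss_E_eq by blast
    have "i \<noteq> j" using pe i j by auto
    thus "x = 0" using blk_disj[OF k2 \<open>i \<noteq> j\<close>] pe i j by auto
  qed
  show "\<not> has_berge_cycle (superstar_E n k)"
  proof
    assume "has_berge_cycle (superstar_E n k)"
    then obtain q vs es where c: "q \<ge> 2" "inj_on vs {..<q}" "inj_on (es :: nat \<Rightarrow> nat set) {..<q}"
        "\<forall>i<q. es i \<in> superstar_E n k \<and> vs i \<in> es i \<and> vs (Suc i mod q) \<in> es i"
      unfolding has_berge_cycle_def by blast
    have q1: "0 < q" "1 < q" "q - 1 < q" using c by auto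
    have "es 0 \<noteq> es 1" using c(3) q1 by (metis inj_on_contraD lessThan_iff zero_neq_one)
    moreover have "vs 1 \<in> es 0" using c(4) q1 by (metis One_nat_def mod_less)
    moreover have "vs 1 \<in> es 1" using c(4) q1 by blast
    ultimately have v1: "vs 1 = 0" using pw c(4) q1 by blast
    have "es (q - 1) \<noteq> es 0" using c(3) q1 by (metis inj_on_contraD lessThan_iff diff_Suc_1 less_numeral_extra(3) Suc_pred' one_less_numeral_iff semiring_norm(76) zero_less_diff)
    moreover have "vs 0 \<in> es (q - 1)"
    proof -
      have "Suc (q - 1) mod q = 0" using q1 by simp
      thus ?thesis using c(4) q1 by metis
    qed
    moreover have "vs 0 \<in> es 0" using c(4) q1 by blast
    ultimately have v0: "vs 0 = 0" using pw c(4) q1 by blast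
    have "vs 0 \<noteq> vs 1" using c(2) q1 by (metis inj_on_contraD lessThan_iff zero_neq_one)
    thus False using v0 v1 by simp
  qed
qed

lemma rad_empty:
  assumes "finite V" "V \<noteq> {}"
  shows "spectral_radius V {} = 0"
proof -
  have adj0: "adj {} i j = 0" for i j :: 'a unfolding adj_def by simp
  have "{cmod \<mu> |\<mu>. hg_eigenvalue V {} \<mu>} = {0}"
  proof
    show "{cmod \<mu> |\<mu>. hg_eigenvalue V {} \<mu>} \<subseteq> {0}"
    proof
      fix r assume "r \<in> {cmod \<mu> |\<mu>. hg_eigenvalue V {} \<mu>}"
      then obtain \<mu> x i where r: "r = cmod \<mu>" "i \<in> V" "x i \<noteq> 0" "\<forall>i\<in>V. (\<Sum>j\<in>V. complex_of_real (adj {} i j) * x j) = \<mu> * x i"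
        unfolding hg_eigenvalue_def by blast
      have "(\<Sum>j\<in>V. complex_of_real (adj {} i j) * x j) = 0" by (simp add: adj0)
      hence "\<mu> * x i = 0" using r(4) r(2) by simp
      thus "r \<in> {0}" using r by simp
    qed
    have "hg_eigenvalue V {} 0" unfolding hg_eigenvalue_def using assms adj0
      by (intro exI[of _ "\<lambda>_. 1"]) auto
    thus "{0} \<subseteq> {cmod \<mu> |\<mu>. hg_eigenvalue V {} \<mu>}" by force
  qed
  thus ?thesis unfolding spectral_radius_def by simp
qed

lemma iso_windmill:
  assumes iso: "hg_iso V E (superstar_V n) (superstar_E n k)" and sub: "\<forall>e\<in>E. e \<subseteq> V" and ne: "E \<noteq> {}"
  shows "\<exists>c. \<forall>e\<in>E. c \<in> e"
proof -
  obtain f where f: "bij_betw f V (superstar_V n)" "(\<lambda>e. f ` e) ` E = superstar_E n k"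
    using iso unfolding hg_iso_def by blast
  have z: "\<exists>u\<in>e. f u = 0" if e: "e \<in> E" for e
  proof -
    have "f ` e \<in> superstar_E n k" using f(2) e by blast
    hence "0 \<in> f ` e" using ss_center by blast
    thus ?thesis by auto
  qed
  obtain e0 where e0: "e0 \<in> E" using ne by blast
  obtain c where c: "c \<in> e0" "f c = 0" using z[OF e0] by blast
  have "\<forall>e\<in>E. c \<in> e"
  proof
    fix e assume e: "e \<in> E"
    obtain u where u: "u \<in> e" "f u = 0" using z[OF e] by blast
    have "u \<in> V" "c \<in> V" using u c e e0 sub by auto
    hence "u = c" using f(1) u c unfolding bij_betw_def by (metis inj_onD)
    thus "c \<in> e" using u by simp
  qed
  thus ?thesis by blast
qed

context hyp begin

lemma cover:
  assumes conn: "hg_connected V E" and u: "u \<in> V" and cV: "c \<in> V" and uc: "u \<noteq> c"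
  shows "\<exists>e\<in>E. u \<in> e"
proof -
  have "u = c \<or> (\<exists>es. es \<noteq> [] \<and> set es \<subseteq> E \<and> u \<in> hd es \<and> c \<in> last es \<and>
      (\<forall>i. Suc i < length es \<longrightarrow> es ! i \<inter> es ! Suc i \<noteq> {}))"
    using conn[unfolded hg_connected_def, rule_format, OF u cV] .
  then obtain es where es: "es \<noteq> []" "set es \<subseteq> E" "u \<in> hd es" using uc by blast
  have "hd es \<in> E" using es by auto
  thus ?thesis using es by blast
qed

lemma windmill_iso:
  assumes conn: "hg_connected V E" and cV: "c \<in> V" and call: "\<forall>e\<in>E. c \<in> e" and n: "card V = n"
  shows "hg_iso V E (superstar_V n) (superstar_E n k)"
proof -
  define m where "m = card E"
  define d where "d = k - 1"
  have d1: "1 \<le> d" using k3 unfolding d_def by simp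
  have nm: "n = 1 + m * d" using windmill_card[OF conn cV call] n unfolding m_def d_def by simp
  have Mm: "(n - 1) div (k - 1) = m" using nm d1 unfolding d_def[symmetric] by simp
  obtain \<phi> where \<phi>: "bij_betw \<phi> {0..<m} E" using ex_bij_betw_nat_finite[OF finE] unfolding m_def by blast
  have \<phi>E: "\<phi> i \<in> E" if "i < m" for i using \<phi> that by (auto simp: bij_betw_def)
  have exh: "\<exists>h. bij_betw h (\<phi> i - {c}) (blk d i)" if i: "i < m" for i
  proof (rule finite_same_card_bij)
    show "finite (\<phi> i - {c})" using fin_e \<phi>E[OF i] by simp
    show "finite (blk d i)" unfolding blk_def by simp
    show "card (\<phi> i - {c}) = card (blk d i)" using card_minus[OF \<phi>E[OF i], of c] call \<phi>E[OF i] card_blk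
      unfolding d_def by simp
  qed
  define \<psi> where "\<psi> i = (SOME h. bij_betw h (\<phi> i - {c}) (blk d i))" for i
  have \<psi>: "bij_betw (\<psi> i) (\<phi> i - {c}) (blk d i)" if "i < m" for i
    unfolding \<psi>_def using someI_ex[OF exh[OF that]] .
  have uniq: "i = j" if "i < m" "j < m" "u \<in> \<phi> i" "u \<in> \<phi> j" "u \<noteq> c" for i j u
  proof (rule ccontr)
    assume "i \<noteq> j"
    hence "\<phi> i \<noteq> \<phi> j" using \<phi> that unfolding bij_betw_def by (metis atLeastLessThan_iff inj_onD zero_le)
    thus False using C2[of "\<phi> i" "\<phi> j" u c] \<phi>E that call by auto
  qed
  have exi: "\<exists>i<m. u \<in> \<phi> i" if uv: "u \<in> V" "u \<noteq> c" for u
  proof -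
    obtain e where e: "e \<in> E" "u \<in> e" using cover[OF conn uv(1) cV uv(2)] by blast
    then obtain i where "i < m" "\<phi> i = e" using \<phi> unfolding bij_betw_def by auto
    thus ?thesis using e by blast
  qed
  define idx where "idx u = (THE i. i < m \<and> u \<in> \<phi> i)" for u
  have idx: "idx u = i" if "i < m" "u \<in> \<phi> i" "u \<noteq> c" for i u
    unfolding idx_def using that uniq by (intro the_equality) auto
  define f where "f u = (if u = c then 0 else \<psi> (idx u) u)" for u
  have fimg: "f ` \<phi> i = insert 0 (blk d i)" if i: "i < m" for i
  proof -
    have ci: "c \<in> \<phi> i" using call \<phi>E[OF i] by simp
    have "\<phi> i = insert c (\<phi> i - {c})" using ci by auto
    hence "f ` \<phi> i = insert (f c) (f ` (\<phi> i - {c}))" by (metis image_insert)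
    also have "f ` (\<phi> i - {c}) = \<psi> i ` (\<phi> i - {c})"
      unfolding f_def using idx[OF i] by (intro image_cong) auto
    also have "\<dots> = blk d i" using \<psi>[OF i] by (simp add: bij_betw_def)
    finally show ?thesis unfolding f_def by simp
  qed
  have edges: "(\<lambda>e. f ` e) ` E = superstar_E n k"
  proof -
    have "E = \<phi> ` {0..<m}" using \<phi> by (simp add: bij_betw_def)
    hence "(\<lambda>e. f ` e) ` E = (\<lambda>i. f ` \<phi> i) ` {0..<m}" by auto
    also have "\<dots> = (\<lambda>i. insert 0 (blk d i)) ` {0..<m}" using fimg by (intro image_cong) auto
    also have "\<dots> = superstar_E n k" unfolding ss_E_eq Mm d_def by auto
    finally show ?thesis .
  qed
  have Veq: "V = insert c (\<Union>i<m. \<phi> i)"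
  proof
    show "V \<subseteq> insert c (\<Union>i<m. \<phi> i)" using exi by blast
    show "insert c (\<Union>i<m. \<phi> i) \<subseteq> V" using cV \<phi>E subV by blast
  qed
  have "f ` V = insert (f c) (\<Union>i<m. f ` \<phi> i)" unfolding Veq by (simp add: image_UN)
  also have "\<dots> = insert 0 (\<Union>i<m. insert 0 (blk d i))" using fimg unfolding f_def by simp
  also have "\<dots> = insert 0 (\<Union>i<m. blk d i)" by auto
  also have "\<dots> = insert 0 {1..<m * d + 1}" unfolding blk_union ..
  also have "\<dots> = {0..<n}" unfolding nm by auto
  finally have fV: "f ` V = superstar_V n" unfolding superstar_V_def .
  have "card (f ` V) = card V" using fV n unfolding superstar_V_def by simp
  hence "inj_on f V" using eq_card_imp_inj_on finV by blast
  hence "bij_betw f V (superstar_V n)" using fV unfolding bij_betw_def by blast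
  thus ?thesis unfolding hg_iso_def using edges by blast
qed

end

lemma eig_fin_ne:
  fixes V :: "'a set" and E :: "'a set set"
  assumes finV: "finite V" and ne: "V \<noteq> {}"
  shows "finite {\<mu>. hg_eigenvalue V E \<mu>}" and "\<exists>\<mu>. hg_eigenvalue V E \<mu>"
proof -
  define n where "n = card V"
  obtain h where h: "bij_betw h {0..<n} V" using ex_bij_betw_nat_finite[OF finV] unfolding n_def by blast
  have n0: "0 < n" using finV ne unfolding n_def by (simp add: card_gt_0_iff)
  define A where "A = mat n n (\<lambda>(i,j). complex_of_real (adj E (h i) (h j)))"
  have A: "A \<in> carrier_mat n n" unfolding A_def by simp
  have hV: "h i \<in> V" if "i < n" for i using h that by (auto simp: bij_betw_def)
  have reidx: "(\<Sum>j\<in>{0..<n}. g (h j)) = (\<Sum>u\<in>V. g u)" for g :: "'a \<Rightarrow> complex"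
    by (rule sum.reindex_bij_betw[OF h])
  have Amv: "(A *\<^sub>v v) $ i = (\<Sum>j\<in>{0..<n}. complex_of_real (adj E (h i) (h j)) * v $ j)"
    if "i < n" "v \<in> carrier_vec n" for i v
    using that A unfolding A_def by (simp add: scalar_prod_def)
  have toA: "eigenvalue A \<mu>" if ev: "hg_eigenvalue V E \<mu>" for \<mu>
  proof -
    obtain x where x: "\<exists>i\<in>V. x i \<noteq> 0" "\<forall>i\<in>V. (\<Sum>j\<in>V. complex_of_real (adj E i j) * x j) = \<mu> * x i"
      using ev unfolding hg_eigenvalue_def by blast
    define v where "v = vec n (\<lambda>i. x (h i))"
    have vc: "v \<in> carrier_vec n" unfolding v_def by simp
    obtain i0 where i0: "i0 \<in> V" "x i0 \<noteq> 0" using x by blast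
    obtain i' where i': "i' < n" "h i' = i0" using h i0 by (auto simp: bij_betw_def)
    have "v $ i' \<noteq> 0" unfolding v_def using i' i0 by simp
    hence vnz: "v \<noteq> 0\<^sub>v n" using i' by auto
    have "A *\<^sub>v v = \<mu> \<cdot>\<^sub>v v"
    proof (rule eq_vecI)
      show "dim_vec (A *\<^sub>v v) = dim_vec (\<mu> \<cdot>\<^sub>v v)" using A vc by simp
      fix i assume "i < dim_vec (\<mu> \<cdot>\<^sub>v v)"
      hence i: "i < n" using vc by simp
      have "(A *\<^sub>v v) $ i = (\<Sum>j\<in>{0..<n}. complex_of_real (adj E (h i) (h j)) * x (h j))"
        using Amv[OF i vc] unfolding v_def by simp
      also have "\<dots> = (\<Sum>u\<in>V. complex_of_real (adj E (h i) u) * x u)"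
        by (rule reidx)
      also have "\<dots> = \<mu> * x (h i)" using x(2) hV[OF i] by simp
      finally show "(A *\<^sub>v v) $ i = (\<mu> \<cdot>\<^sub>v v) $ i" unfolding v_def using i by simp
    qed
    thus ?thesis unfolding eigenvalue_def eigenvector_def using vc vnz A by auto
  qed
  have cp: "degree (char_poly A) = n \<and> coeff (char_poly A) n = 1" by (rule degree_monic_char_poly[OF A])
  hence cpnz: "char_poly A \<noteq> 0" by auto
  have "{\<mu>. hg_eigenvalue V E \<mu>} \<subseteq> {\<mu>. poly (char_poly A) \<mu> = 0}"
    using toA eigenvalue_root_char_poly[OF A] by blast
  thus "finite {\<mu>. hg_eigenvalue V E \<mu>}" using poly_roots_finite[OF cpnz] finite_subset by blast
  have "\<not> constant (poly (char_poly A))" using cp n0 by (simp add: constant_degree)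
  then obtain z where "poly (char_poly A) z = 0" using fundamental_theorem_of_algebra by blast
  hence "eigenvalue A z" using eigenvalue_root_char_poly[OF A] by blast
  then obtain v where v: "v \<in> carrier_vec n" "v \<noteq> 0\<^sub>v n" "A *\<^sub>v v = z \<cdot>\<^sub>v v"
    unfolding eigenvalue_def eigenvector_def using A by auto
  define g where "g = inv_into {0..<n} h"
  have gh: "g (h i) = i" if "i < n" for i unfolding g_def using h that
    by (simp add: bij_betw_def inv_into_f_f)
  define x where "x u = v $ (g u)" for u
  have "\<exists>i<n. v $ i \<noteq> 0"
  proof (rule ccontr)
    assume "\<not> (\<exists>i<n. v $ i \<noteq> 0)"
    hence "v = 0\<^sub>v n" using v(1) by (intro eq_vecI) auto
    thus False using v(2) by simp
  qed
  then obtain i0 where i0: "i0 < n" "v $ i0 \<noteq> 0" by blast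
  have nz: "\<exists>i\<in>V. x i \<noteq> 0" using hV[OF i0(1)] gh[OF i0(1)] i0(2) unfolding x_def by force
  have eq: "\<forall>u\<in>V. (\<Sum>j\<in>V. complex_of_real (adj E u j) * x j) = z * x u"
  proof
    fix u assume u: "u \<in> V"
    obtain i where i: "i < n" "h i = u" using h u by (auto simp: bij_betw_def)
    have "(\<Sum>j\<in>V. complex_of_real (adj E u j) * x j) = (\<Sum>j\<in>{0..<n}. complex_of_real (adj E u (h j)) * x (h j))"
      by (rule reidx[symmetric])
    also have "\<dots> = (\<Sum>j\<in>{0..<n}. complex_of_real (adj E (h i) (h j)) * v $ j)"
      using gh i unfolding x_def by (intro sum.cong) auto
    also have "\<dots> = (A *\<^sub>v v) $ i" using Amv[OF i(1) v(1)] by simp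
    also have "\<dots> = z * v $ i" using v i by simp
    also have "\<dots> = z * x u" unfolding x_def using gh[OF i(1)] i(2) by simp
    finally show "(\<Sum>j\<in>V. complex_of_real (adj E u j) * x j) = z * x u" .
  qed
  show "\<exists>\<mu>. hg_eigenvalue V E \<mu>" unfolding hg_eigenvalue_def using nz eq by blast
qed

theorem theorem1p1:
  fixes V :: "'a set" and E :: "'a set set" and k n :: nat
  assumes "k \<ge> 3"
    and "supertree V E"
    and "uniform k E"
    and "card V = n"
  shows "spectral_radius V E \<le> spectral_radius (superstar_V n) (superstar_E n k) \<and>
    (spectral_radius V E = spectral_radius (superstar_V n) (superstar_E n k)
      \<longleftrightarrow> hg_iso V E (superstar_V n) (superstar_E n k))"
proof -
  note k3 = assms(1)
  have hg: "hypergraph V E" and conn: "hg_connected V E" and acyc: "\<not> has_berge_cycle E"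
    using assms(2) unfolding supertree_def by auto
  have finV: "finite V" and Vne: "V \<noteq> {}" and sub: "\<forall>e\<in>E. e \<subseteq> V"
    using hg unfolding hypergraph_def by auto
  have unif: "\<forall>e\<in>E. card e = k" using assms(3) unfolding uniform_def by auto
  interpret G: hyp V E k using finV sub unif k3 acyc by unfold_locales auto
  interpret S: hyp "superstar_V n" "superstar_E n k" k by (rule ss_hyp[OF k3])
  have "0 < card V" using finV Vne by (simp add: card_gt_0_iff)
  hence n1: "1 \<le> n" using assms(4) by simp
  have Sc: "card (superstar_V n) = n" unfolding superstar_V_def by simp
  show ?thesis
  proof (cases "E = {}")
    case True
    obtain c where c: "c \<in> V" using Vne by blast
    have Vc: "V = {c}"
    proof
      show "V \<subseteq> {c}"
      proof
        fix u assume u: "u \<in> V"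
        have "u = c \<or> (\<exists>es. es \<noteq> [] \<and> set es \<subseteq> E \<and> u \<in> hd es \<and> c \<in> last es \<and>
            (\<forall>i. Suc i < length es \<longrightarrow> es ! i \<inter> es ! Suc i \<noteq> {}))"
          using conn[unfolded hg_connected_def, rule_format, OF u c] .
        thus "u \<in> {c}" using True by auto
      qed
      show "{c} \<subseteq> V" using c by simp
    qed
    hence n: "n = 1" using assms(4) by simp
    have SE: "superstar_E n k = {}"
    proof -
      have "{..<(n - 1) div (k - 1)} = {}" using n by simp
      thus ?thesis by (simp only: ss_E_eq image_empty)
    qed
    have r1: "spectral_radius V E = 0" using rad_empty[OF finV Vne] True by simp
    have r2: "spectral_radius (superstar_V n) (superstar_E n k) = 0"
      unfolding SE by (rule rad_empty) (auto simp: superstar_V_def n)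
    have "hg_iso V E (superstar_V n) (superstar_E n k)"
      unfolding hg_iso_def SE True Vc superstar_V_def
      by (intro exI[of _ "\<lambda>_. 0"]) (auto simp: bij_betw_def n)
    thus ?thesis using r1 r2 by simp
  next
    case False
    define mS where "mS = (n - 1) div (k - 1)"
    have Gmm: "(card V - 1) div (k - 1) = mS" unfolding mS_def assms(4) ..
    have Smm: "(card (superstar_V n) - 1) div (k - 1) = mS" unfolding mS_def Sc ..
    obtain e where e: "e \<in> E" using False by blast
    have "k \<le> n" using card_mono[OF finV sub[rule_format, OF e]] unif e assms(4) by simp
    hence "1 * (k - 1) \<le> n - 1" using k3 by simp
    hence mS1: "1 \<le> mS" unfolding mS_def using div_le_mono[of "1 * (k - 1)" "n - 1" "k - 1"] k3 by simp
    define \<rho> where "\<rho> = lamk k mS / (real k - 1)"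
    have "0 \<in> {..<mS}" using mS1 by simp
    hence SEne: "superstar_E n k \<noteq> {}" unfolding ss_E_eq mS_def[symmetric] by blast
    have rS: "spectral_radius (superstar_V n) (superstar_E n k) = \<rho>"
      unfolding \<rho>_def
      using S.rad_eq[of 0] n1 ss_center SEne ss_card[of k n] k3 Smm mS_def
      by (simp add: superstar_V_def)
    define X where "X = {cmod \<mu> |\<mu>. hg_eigenvalue V E \<mu>}"
    have Xfin: "finite X" unfolding X_def using eig_fin_ne(1)[OF finV Vne, of E] by simp
    have Xne: "X \<noteq> {}" unfolding X_def using eig_fin_ne(2)[OF finV Vne, of E] by auto
    have Xle: "\<forall>y\<in>X. y \<le> \<rho>" unfolding X_def \<rho>_def using G.radius_bound Gmm by auto
    have rG: "spectral_radius V E = Sup X" unfolding spectral_radius_def X_def ..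
    have le: "spectral_radius V E \<le> \<rho>" unfolding rG using Xne Xle by (intro cSup_least) auto
    show ?thesis
    proof (cases "\<exists>c. \<forall>e\<in>E. c \<in> e")
      case True
      then obtain c where call: "\<forall>e\<in>E. c \<in> e" by blast
      have cV: "c \<in> V" using call e sub by blast
      have "card V = 1 + card E * (k - 1)" using G.windmill_card[OF conn cV call] .
      hence "(card V - 1) div (k - 1) = card E" using k3 by simp
      hence "spectral_radius V E = \<rho>" using G.rad_eq[OF cV call False] Gmm unfolding \<rho>_def by simp
      moreover have "hg_iso V E (superstar_V n) (superstar_E n k)"
        using G.windmill_iso[OF conn cV call assms(4)] .
      ultimately show ?thesis using rS by simp
    next
      case nw: False
      have "\<forall>y\<in>X. y < \<rho>"
      proof
        fix y assume "y \<in> X"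
        then obtain \<mu> where \<mu>: "y = cmod \<mu>" "hg_eigenvalue V E \<mu>" unfolding X_def by blast
        show "y < \<rho>"
        proof (rule ccontr)
          assume "\<not> y < \<rho>"
          hence "lamk k ((card V - 1) div (k - 1)) / (real k - 1) \<le> cmod \<mu>" using \<mu> Gmm unfolding \<rho>_def by simp
          thus False using G.radius_strict[OF conn \<mu>(2)] nw by blast
        qed
      qed
      moreover have "Sup X \<in> X" using Xfin Xne by (simp add: cSup_eq_Max)
      ultimately have lt: "spectral_radius V E < \<rho>" unfolding rG by blast
      have "\<not> hg_iso V E (superstar_V n) (superstar_E n k)"
        using iso_windmill[OF _ sub False] nw by blast
      thus ?thesis using lt rS by simp
    qed
  qed
qed

end
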